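(* Fix an attacker label $A\in\mathcal{L}$. For all labels $pc$, all partial bijections $\beta$, all initial configurations $c_1,c_2$ and environments $\theta_1,\theta_2$ of $\lambda^{dFG}$ extended with flow-sensitive references such that $\vdash\mathbf{Valid}(c_1,\theta_1)$, $\vdash\mathbf{Valid}(c_2,\theta_2)$, $c_1\approx^{\beta}_A c_2$ and $\theta_1\approx^{\beta}_A\theta_2$: if $c_1\Downarrow^{\theta_1}_{pc}c_1'$ and $c_2\Downarrow^{\theta_2}_{pc}c_2'$, then there exists a partial bijection $\beta'\supseteq\beta$ such that $c_1'\approx^{\beta'}_A c_2'$.
   Context: Fix a lattice $(\mathcal{L},\sqsubseteq,\sqcup)$ of labels. The calculus has types $\tau::=\mathbf{unit}\mid\tau_1\to\tau_2\mid\tau_1+\tau_2\mid\tau_1\times\tau_2\mid\mathcal{L}\mid\mathbf{Ref}\,s\,\tau$ with $s\in\{I,S\}$ (standard simple typing; terms are implicitly well-typed and the tag $s$ determines which reference rules apply), expressions $e::=x\mid\lambda x.e\mid e_1\,e_2\mid()\mid\ell\mid(e_1,e_2)\mid\mathbf{fst}(e)\mid\mathbf{snd}(e)\mid\mathbf{inl}(e)\mid\mathbf{inr}(e)\mid\mathbf{case}(e,x.e_1,x.e_2)\mid\mathbf{getLabel}\mid\mathbf{labelOf}(e)\mid e_1\sqsubseteq^{?}e_2\mid\mathbf{taint}(e_1,e_2)\mid\mathbf{new}(e)\mid\,!e\mid e_1:=e_2\mid\mathbf{labelOfRef}(e)$, raw values $r::=()\mid(x.e,\theta)\mid\mathbf{inl}(v)\mid\mathbf{inr}(v)\mid(v_1,v_2)\mid\ell\mid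 n_\ell\mid n$ ($n\in\mathbb N$; $n_\ell$ is a flow-insensitive reference to memory $\ell$, $n$ a flow-sensitive heap address), values $v::=r^{\ell}$, environments $\theta$ finite maps from variables to values; $v\sqcup\ell'$ denotes $r^{\ell\sqcup\ell'}$ for $v=r^\ell$. Memories are finite lists of raw values, a store $\Sigma$ maps each label to a memory, a heap $\mu$ is a finite list of values; for a list $X$, $|X|$ is its length, $X[n]$ its $n$-th entry (from $0$), $X[n\mapsto y]$ the list with entry $n$ replaced (appended if $n=|X|$). Evaluation $\langle\Sigma,\mu,e\rangle\Downarrow^\theta_{pc}\langle\Sigma',\mu',v\rangle$ is the least relation closed under the rules below; "$e\Downarrow v$" means evaluation with current $\theta,pc$, store and heap threaded through premises left to right, rules without premises leave them unchanged. (Var) $x\Downarrow\theta(x)\sqcup pc$. (Unit) $()\Downarrow()^{pc}$. (Label) $\ell\Downarrow\ell^{pc}$. (Fun) $\lambda x.e\Downarrow(x.e,\theta)^{pc}$. (GetLabel) $\mathbf{getLabel}\Downarrow pc^{pc}$. (App) if $e_1\Downarrow(x.e,\theta')^{\ell}$, $e_2\Downarrow v_2$, and $e$ evaluates to $v$ in $\theta'[x\mapsto v_2]$ with program counter $pc\sqcup\ell$, then $e_1\,e_2\Downarrow v$. (Inl/Inr) $\mathbf{inl}(e)\Downarrow\mathbf{inl}(v)^{pc}$ if $e\Downarrow v$, similarly $\mathbf{inr}$. (Case) if $e\Downarrow\mathbf{inl}(v_1)^\ell$ and $e_1$ evaluates to $v$ in $\theta[x\mapsto v_1]$ at $pc\sqcup\ell$,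 then $\mathbf{case}(e,x.e_1,x.e_2)\Downarrow v$; symmetrically for $\mathbf{inr}$. (Pair) $(e_1,e_2)\Downarrow(v_1,v_2)^{pc}$. (Fst/Snd) if $e\Downarrow(v_1,v_2)^\ell$ then $\mathbf{fst}(e)\Downarrow v_1\sqcup\ell$, $\mathbf{snd}(e)\Downarrow v_2\sqcup\ell$. (LabelOf) if $e\Downarrow r^\ell$ then $\mathbf{labelOf}(e)\Downarrow\ell^\ell$. (Compare) if $e_1\Downarrow\ell_1^{\ell_1'}$, $e_2\Downarrow\ell_2^{\ell_2'}$ then $e_1\sqsubseteq^?e_2\Downarrow\mathbf{inl}(()^{pc})^{\ell_1'\sqcup\ell_2'}$ if $\ell_1\sqsubseteq\ell_2$, else $\mathbf{inr}(()^{pc})^{\ell_1'\sqcup\ell_2'}$. (Taint) if $e_1\Downarrow\ell^{\ell'}$, $\ell'\sqsubseteq\ell$, and $e_2$ evaluates to $v$ with program counter $\ell$, then $\mathbf{taint}(e_1,e_2)\Downarrow v$. Flow-insensitive references ($\mathbf{Ref}\,I$): (New) if $e\Downarrow r^\ell$ with store $\Sigma'$, $n=|\Sigma'(\ell)|$, then $\mathbf{new}(e)\Downarrow(n_\ell)^{pc}$ with store $\Sigma'[\ell\mapsto\Sigma'(\ell)[n\mapsto r]]$; (Read) if $e\Downarrow(n_\ell)^{\ell'}$ with store $\Sigma'$, $\Sigma'(\ell)[n]=r$, then $!e\Downarrow r^{\ell\sqcup\ell'}$; (Write) if $e_1\Downarrow(n_\ell)^{\ell_1}$, $\ell_1\sqsubseteq\ell$,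 $e_2\Downarrow r^{\ell_2}$ with store $\Sigma''$, $\ell_2\sqsubseteq\ell$, then $e_1:=e_2\Downarrow()^{pc}$ with store $\Sigma''[\ell\mapsto\Sigma''(\ell)[n\mapsto r]]$; (LabelOfRef) if $e\Downarrow(n_\ell)^{\ell'}$ then $\mathbf{labelOfRef}(e)\Downarrow\ell^{\ell\sqcup\ell'}$. Flow-sensitive references ($\mathbf{Ref}\,S$): (New-FS) if $e\Downarrow v$ with heap $\mu'$ and $n=|\mu'|$, then $\mathbf{new}(e)\Downarrow n^{pc}$ with heap $\mu'[n\mapsto v]$; (Read-FS) if $e\Downarrow n^{\ell}$ with heap $\mu'$ and $\mu'[n]=r^{\ell'}$, then $!e\Downarrow r^{\ell\sqcup\ell'}$; (LabelOfRef-FS) if $e\Downarrow n^{\ell_1}$ with heap $\mu'$ and $\mu'[n]=r^{\ell_2}$ then $\mathbf{labelOfRef}(e)\Downarrow\ell_2^{\ell_1\sqcup\ell_2}$; (Write-FS) if $e_1\Downarrow n^{\ell}$, $e_2\Downarrow r_2^{\ell_2}$ with heap $\mu''$, $\mu''[n]=r_1^{\ell_1}$ and $\ell\sqsubseteq\ell_1$, then $e_1:=e_2\Downarrow()^{pc}$ with heap $\mu''[n\mapsto r_2^{\ell_2\sqcup\ell}]$. Initial configurations are $\langle\Sigma,\mu,e\rangle$, final ones $\langle\Sigma,\mu,v\rangle$, and $c\Downarrow^\theta_{pc}c'$ is the evaluation relation. A partial bijection $\beta$ is a finite injective partial function $\mathbb N\rightharpoonup\mathbb N$; $\beta\subseteq\beta'$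 means every pair of $\beta$ is in $\beta'$. $A$-equivalence up to $\beta$ ($\approx^\beta_A$), mutually on values and raw values: $r_1^\ell\approx^\beta_A r_2^\ell$ if $\ell\sqsubseteq A$ and $r_1\approx^\beta_A r_2$; $r_1^{\ell_1}\approx^\beta_A r_2^{\ell_2}$ if $\ell_1,\ell_2\not\sqsubseteq A$; $()\approx()$, $\ell\approx\ell$; closures $(x.e_1,\theta_1)\approx^\beta_A(x.e_2,\theta_2)$ if $e_1,e_2$ $\alpha$-equivalent and $\theta_1\approx^\beta_A\theta_2$ (same domain, pointwise); injections and pairs homomorphically; $n_\ell\approx^\beta_A n_\ell$ if $\ell\sqsubseteq A$; $(n_1)_{\ell_1}\approx^\beta_A(n_2)_{\ell_2}$ if $\ell_1,\ell_2\not\sqsubseteq A$; $n_1\approx^\beta_A n_2$ (heap addresses) iff $\beta(n_1)=n_2$. Memories at label $\ell$: always related if $\ell\not\sqsubseteq A$, otherwise same length and pointwise related; stores pointwise. Heaps: $\mu_1\approx^\beta_A\mu_2$ iff $\mathrm{dom}(\beta)\subseteq\{0,\dots,|\mu_1|-1\}$, $\mathrm{rng}(\beta)\subseteq\{0,\dots,|\mu_2|-1\}$ and $\mu_1[n_1]\approx^\beta_A\mu_2[n_2]$ whenever $\beta(n_1)=n_2$. Initial configurations $\langle\Sigma_1,\mu_1,e_1\rangle\approx^\beta_A\langle\Sigma_2,\mu_2,e_2\rangle$ iff $\Sigma_1\approx^\beta_A\Sigma_2$, $\mu_1\approx^\beta_A\mu_2$ and $e_1,e_2$ $\alpha$-equivalent;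 final configurations $\langle\Sigma_1,\mu_1,v_1\rangle\approx^\beta_A\langle\Sigma_2,\mu_2,v_2\rangle$ iff the stores, heaps and values are related up to $\beta$. Validity: $n\vdash\mathbf{Valid}(x)$ for a value, raw value, environment, memory, store or heap $x$ means every flow-sensitive heap address $n'$ occurring in $x$ (including inside closure environments and nested values) satisfies $n'<n$ (flow-insensitive references $n'_\ell$ are always valid). $\vdash\mathbf{Valid}(\langle\Sigma,\mu,e\rangle,\theta)$ iff, for $n=|\mu|$, $n\vdash\mathbf{Valid}(\Sigma)$, $n\vdash\mathbf{Valid}(\mu)$ and $n\vdash\mathbf{Valid}(\theta)$. *)

theory Defs
  imports Main
begin

(* Labels: an arbitrary join-semilattice ('l::semilattice_sup), with \<le> as \<sqsubseteq> and sup as \<squnion>. *)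

datatype tag = I | S

(* Expressions; variables are de Bruijn indices (so alpha-equivalence is syntactic equality).
   Reference operations carry the tag s of their (implicit) type Ref s tau. *)
datatype 'l expr =
    Var nat
  | Lam "'l expr"
  | App "'l expr" "'l expr"
  | Unit
  | Lbl 'l
  | Pair "'l expr" "'l expr"
  | Fst "'l expr"
  | Snd "'l expr"
  | Inl "'l expr"
  | Inr "'l expr"
  | Case "'l expr" "'l expr" "'l expr"   (* binds index 0 in both branches *)
  | GetLabel
  | LabelOf "'l expr"
  | Cmp "'l expr" "'l expr"
  | Taint "'l expr" "'l expr"
  | New tag "'l expr"
  | Read tag "'l expr"
  | Write tag "'l expr" "'l expr"
  | LabelOfRef tag "'l expr"

datatype 'l raw =
    RUnit
  | Clos "'l expr" "'l vl list"   (* closure (x.e, theta); env is a list indexed by de Bruijn index *)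
  | RInl "'l vl"
  | RInr "'l vl"
  | RPair "'l vl" "'l vl"
  | RLbl 'l
  | RRefI 'l nat       (* n_l : flow-insensitive reference into memory l *)
  | RRefS nat          (* n : flow-sensitive heap address *)
and 'l vl = Val "'l raw" 'l

type_synonym 'l env = "'l vl list"
type_synonym 'l memory = "'l raw list"
type_synonym 'l store = "'l \<Rightarrow> 'l memory"
type_synonym 'l heap = "'l vl list"
type_synonym 'l iconf = "'l store \<times> 'l heap \<times> 'l expr"
type_synonym 'l fconf = "'l store \<times> 'l heap \<times> 'l vl"

fun vjoin :: "'l::semilattice_sup vl \<Rightarrow> 'l \<Rightarrow> 'l vl" where
  "vjoin (Val r l) l' = Val r (sup l l')"

definition lupd :: "'a list \<Rightarrow> nat \<Rightarrow> 'a \<Rightarrow> 'a list" where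
  "lupd X n y = (if n = length X then X @ [y] else X[n := y])"

inductive eval :: "'l::semilattice_sup env \<Rightarrow> 'l \<Rightarrow> 'l iconf \<Rightarrow> 'l fconf \<Rightarrow> bool" where
  EVar: "i < length \<theta> \<Longrightarrow> eval \<theta> pc (\<Sigma>, \<mu>, Var i) (\<Sigma>, \<mu>, vjoin (\<theta> ! i) pc)"
| EUnit: "eval \<theta> pc (\<Sigma>, \<mu>, Unit) (\<Sigma>, \<mu>, Val RUnit pc)"
| ELabel: "eval \<theta> pc (\<Sigma>, \<mu>, Lbl l) (\<Sigma>, \<mu>, Val (RLbl l) pc)"
| EFun: "eval \<theta> pc (\<Sigma>, \<mu>, Lam e) (\<Sigma>, \<mu>, Val (Clos e \<theta>) pc)"
| EGetLabel: "eval \<theta> pc (\<Sigma>, \<mu>, GetLabel) (\<Sigma>, \<mu>, Val (RLbl pc) pc)"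
| EApp: "\<lbrakk> eval \<theta> pc (\<Sigma>, \<mu>, e1) (\<Sigma>1, \<mu>1, Val (Clos e \<theta>') l);
          eval \<theta> pc (\<Sigma>1, \<mu>1, e2) (\<Sigma>2, \<mu>2, v2);
          eval (v2 # \<theta>') (sup pc l) (\<Sigma>2, \<mu>2, e) c' \<rbrakk>
         \<Longrightarrow> eval \<theta> pc (\<Sigma>, \<mu>, App e1 e2) c'"
| EInl: "eval \<theta> pc (\<Sigma>, \<mu>, e) (\<Sigma>', \<mu>', v) \<Longrightarrow> eval \<theta> pc (\<Sigma>, \<mu>, Inl e) (\<Sigma>', \<mu>', Val (RInl v) pc)"
| EInr: "eval \<theta> pc (\<Sigma>, \<mu>, e) (\<Sigma>', \<mu>', v) \<Longrightarrow> eval \<theta> pc (\<Sigma>, \<mu>, Inr e) (\<Sigma>', \<mu>', Val (RInr v) pc)"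
| ECaseL: "\<lbrakk> eval \<theta> pc (\<Sigma>, \<mu>, e) (\<Sigma>1, \<mu>1, Val (RInl v1) l);
           eval (v1 # \<theta>) (sup pc l) (\<Sigma>1, \<mu>1, e1) c' \<rbrakk>
          \<Longrightarrow> eval \<theta> pc (\<Sigma>, \<mu>, Case e e1 e2) c'"
| ECaseR: "\<lbrakk> eval \<theta> pc (\<Sigma>, \<mu>, e) (\<Sigma>1, \<mu>1, Val (RInr v1) l);
           eval (v1 # \<theta>) (sup pc l) (\<Sigma>1, \<mu>1, e2) c' \<rbrakk>
          \<Longrightarrow> eval \<theta> pc (\<Sigma>, \<mu>, Case e e1 e2) c'"
| EPair: "\<lbrakk> eval \<theta> pc (\<Sigma>, \<mu>, e1) (\<Sigma>1, \<mu>1, v1); eval \<theta> pc (\<Sigma>1, \<mu>1, e2) (\<Sigma>2, \<mu>2, v2) \<rbrakk>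
          \<Longrightarrow> eval \<theta> pc (\<Sigma>, \<mu>, Pair e1 e2) (\<Sigma>2, \<mu>2, Val (RPair v1 v2) pc)"
| EFst: "eval \<theta> pc (\<Sigma>, \<mu>, e) (\<Sigma>', \<mu>', Val (RPair v1 v2) l)
          \<Longrightarrow> eval \<theta> pc (\<Sigma>, \<mu>, Fst e) (\<Sigma>', \<mu>', vjoin v1 l)"
| ESnd: "eval \<theta> pc (\<Sigma>, \<mu>, e) (\<Sigma>', \<mu>', Val (RPair v1 v2) l)
          \<Longrightarrow> eval \<theta> pc (\<Sigma>, \<mu>, Snd e) (\<Sigma>', \<mu>', vjoin v2 l)"
| ELabelOf: "eval \<theta> pc (\<Sigma>, \<mu>, e) (\<Sigma>', \<mu>', Val r l)
          \<Longrightarrow> eval \<theta> pc (\<Sigma>, \<mu>, LabelOf e) (\<Sigma>', \<mu>', Val (RLbl l) l)"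
| ECmpT: "\<lbrakk> eval \<theta> pc (\<Sigma>, \<mu>, e1) (\<Sigma>1, \<mu>1, Val (RLbl l1) l1');
           eval \<theta> pc (\<Sigma>1, \<mu>1, e2) (\<Sigma>2, \<mu>2, Val (RLbl l2) l2'); l1 \<le> l2 \<rbrakk>
          \<Longrightarrow> eval \<theta> pc (\<Sigma>, \<mu>, Cmp e1 e2) (\<Sigma>2, \<mu>2, Val (RInl (Val RUnit pc)) (sup l1' l2'))"
| ECmpF: "\<lbrakk> eval \<theta> pc (\<Sigma>, \<mu>, e1) (\<Sigma>1, \<mu>1, Val (RLbl l1) l1');
           eval \<theta> pc (\<Sigma>1, \<mu>1, e2) (\<Sigma>2, \<mu>2, Val (RLbl l2) l2'); \<not> l1 \<le> l2 \<rbrakk>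
          \<Longrightarrow> eval \<theta> pc (\<Sigma>, \<mu>, Cmp e1 e2) (\<Sigma>2, \<mu>2, Val (RInr (Val RUnit pc)) (sup l1' l2'))"
| ETaint: "\<lbrakk> eval \<theta> pc (\<Sigma>, \<mu>, e1) (\<Sigma>1, \<mu>1, Val (RLbl l) l'); l' \<le> l;
           eval \<theta> l (\<Sigma>1, \<mu>1, e2) c' \<rbrakk>
          \<Longrightarrow> eval \<theta> pc (\<Sigma>, \<mu>, Taint e1 e2) c'"
| ENew: "\<lbrakk> eval \<theta> pc (\<Sigma>, \<mu>, e) (\<Sigma>', \<mu>', Val r l); n = length (\<Sigma>' l) \<rbrakk>
          \<Longrightarrow> eval \<theta> pc (\<Sigma>, \<mu>, New I e) (\<Sigma>'(l := lupd (\<Sigma>' l) n r), \<mu>', Val (RRefI l n) pc)"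
| ERead: "\<lbrakk> eval \<theta> pc (\<Sigma>, \<mu>, e) (\<Sigma>', \<mu>', Val (RRefI l n) l'); n < length (\<Sigma>' l); \<Sigma>' l ! n = r \<rbrakk>
          \<Longrightarrow> eval \<theta> pc (\<Sigma>, \<mu>, Read I e) (\<Sigma>', \<mu>', Val r (sup l l'))"
| EWrite: "\<lbrakk> eval \<theta> pc (\<Sigma>, \<mu>, e1) (\<Sigma>1, \<mu>1, Val (RRefI l n) l1); l1 \<le> l;
            eval \<theta> pc (\<Sigma>1, \<mu>1, e2) (\<Sigma>2, \<mu>2, Val r l2); l2 \<le> l; n \<le> length (\<Sigma>2 l) \<rbrakk>
          \<Longrightarrow> eval \<theta> pc (\<Sigma>, \<mu>, Write I e1 e2) (\<Sigma>2(l := lupd (\<Sigma>2 l) n r), \<mu>2, Val RUnit pc)"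
| ELabelOfRef: "eval \<theta> pc (\<Sigma>, \<mu>, e) (\<Sigma>', \<mu>', Val (RRefI l n) l')
          \<Longrightarrow> eval \<theta> pc (\<Sigma>, \<mu>, LabelOfRef I e) (\<Sigma>', \<mu>', Val (RLbl l) (sup l l'))"
| ENewFS: "\<lbrakk> eval \<theta> pc (\<Sigma>, \<mu>, e) (\<Sigma>', \<mu>', v); n = length \<mu>' \<rbrakk>
          \<Longrightarrow> eval \<theta> pc (\<Sigma>, \<mu>, New S e) (\<Sigma>', lupd \<mu>' n v, Val (RRefS n) pc)"
| EReadFS: "\<lbrakk> eval \<theta> pc (\<Sigma>, \<mu>, e) (\<Sigma>', \<mu>', Val (RRefS n) l); n < length \<mu>'; \<mu>' ! n = Val r l' \<rbrakk>
          \<Longrightarrow> eval \<theta> pc (\<Sigma>, \<mu>, Read S e) (\<Sigma>', \<mu>', Val r (sup l l'))"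
| ELabelOfRefFS: "\<lbrakk> eval \<theta> pc (\<Sigma>, \<mu>, e) (\<Sigma>', \<mu>', Val (RRefS n) l1); n < length \<mu>'; \<mu>' ! n = Val r l2 \<rbrakk>
          \<Longrightarrow> eval \<theta> pc (\<Sigma>, \<mu>, LabelOfRef S e) (\<Sigma>', \<mu>', Val (RLbl l2) (sup l1 l2))"
| EWriteFS: "\<lbrakk> eval \<theta> pc (\<Sigma>, \<mu>, e1) (\<Sigma>1, \<mu>1, Val (RRefS n) l);
            eval \<theta> pc (\<Sigma>1, \<mu>1, e2) (\<Sigma>2, \<mu>2, Val r2 l2);
            n < length \<mu>2; \<mu>2 ! n = Val r1 l1; l \<le> l1 \<rbrakk>
          \<Longrightarrow> eval \<theta> pc (\<Sigma>, \<mu>, Write S e1 e2) (\<Sigma>2, lupd \<mu>2 n (Val r2 (sup l2 l)), Val RUnit pc)"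

definition pbij :: "(nat \<rightharpoonup> nat) \<Rightarrow> bool" where
  "pbij \<beta> \<longleftrightarrow> finite (dom \<beta>) \<and> inj_on \<beta> (dom \<beta>)"

fun veq :: "'l::semilattice_sup \<Rightarrow> (nat \<rightharpoonup> nat) \<Rightarrow> 'l vl \<Rightarrow> 'l vl \<Rightarrow> bool"
and req :: "'l::semilattice_sup \<Rightarrow> (nat \<rightharpoonup> nat) \<Rightarrow> 'l raw \<Rightarrow> 'l raw \<Rightarrow> bool" where
  "veq A \<beta> (Val r1 l1) (Val r2 l2) \<longleftrightarrow>
     (l1 = l2 \<and> l1 \<le> A \<and> req A \<beta> r1 r2) \<or> (\<not> l1 \<le> A \<and> \<not> l2 \<le> A)"
| "req A \<beta> RUnit RUnit \<longleftrightarrow> True"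
| "req A \<beta> (Clos e1 \<theta>1) (Clos e2 \<theta>2) \<longleftrightarrow> e1 = e2 \<and> list_all2 (veq A \<beta>) \<theta>1 \<theta>2"
| "req A \<beta> (RInl v1) (RInl v2) \<longleftrightarrow> veq A \<beta> v1 v2"
| "req A \<beta> (RInr v1) (RInr v2) \<longleftrightarrow> veq A \<beta> v1 v2"
| "req A \<beta> (RPair v1 w1) (RPair v2 w2) \<longleftrightarrow> veq A \<beta> v1 v2 \<and> veq A \<beta> w1 w2"
| "req A \<beta> (RLbl l1) (RLbl l2) \<longleftrightarrow> l1 = l2"
| "req A \<beta> (RRefI l1 n1) (RRefI l2 n2) \<longleftrightarrow>
     (l1 = l2 \<and> l1 \<le> A \<and> n1 = n2) \<or> (\<not> l1 \<le> A \<and> \<not> l2 \<le> A)"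
| "req A \<beta> (RRefS n1) (RRefS n2) \<longleftrightarrow> \<beta> n1 = Some n2"
| "req A \<beta> _ _ \<longleftrightarrow> False"

definition env_eq :: "'l::semilattice_sup \<Rightarrow> (nat \<rightharpoonup> nat) \<Rightarrow> 'l env \<Rightarrow> 'l env \<Rightarrow> bool" where
  "env_eq A \<beta> \<theta>1 \<theta>2 \<longleftrightarrow> list_all2 (veq A \<beta>) \<theta>1 \<theta>2"

definition mem_eq :: "'l::semilattice_sup \<Rightarrow> (nat \<rightharpoonup> nat) \<Rightarrow> 'l \<Rightarrow> 'l memory \<Rightarrow> 'l memory \<Rightarrow> bool" where
  "mem_eq A \<beta> l m1 m2 \<longleftrightarrow> (\<not> l \<le> A) \<or> list_all2 (req A \<beta>) m1 m2"

definition store_eq :: "'l::semilattice_sup \<Rightarrow> (nat \<rightharpoonup> nat) \<Rightarrow> 'l store \<Rightarrow> 'l store \<Rightarrow> bool" where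
  "store_eq A \<beta> \<Sigma>1 \<Sigma>2 \<longleftrightarrow> (\<forall>l. mem_eq A \<beta> l (\<Sigma>1 l) (\<Sigma>2 l))"

definition heap_eq :: "'l::semilattice_sup \<Rightarrow> (nat \<rightharpoonup> nat) \<Rightarrow> 'l heap \<Rightarrow> 'l heap \<Rightarrow> bool" where
  "heap_eq A \<beta> \<mu>1 \<mu>2 \<longleftrightarrow>
     dom \<beta> \<subseteq> {..<length \<mu>1} \<and> ran \<beta> \<subseteq> {..<length \<mu>2} \<and>
     (\<forall>n1 n2. \<beta> n1 = Some n2 \<longrightarrow> veq A \<beta> (\<mu>1 ! n1) (\<mu>2 ! n2))"

fun iconf_eq :: "'l::semilattice_sup \<Rightarrow> (nat \<rightharpoonup> nat) \<Rightarrow> 'l iconf \<Rightarrow> 'l iconf \<Rightarrow> bool" where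
  "iconf_eq A \<beta> (\<Sigma>1, \<mu>1, e1) (\<Sigma>2, \<mu>2, e2) \<longleftrightarrow>
     store_eq A \<beta> \<Sigma>1 \<Sigma>2 \<and> heap_eq A \<beta> \<mu>1 \<mu>2 \<and> e1 = e2"

fun fconf_eq :: "'l::semilattice_sup \<Rightarrow> (nat \<rightharpoonup> nat) \<Rightarrow> 'l fconf \<Rightarrow> 'l fconf \<Rightarrow> bool" where
  "fconf_eq A \<beta> (\<Sigma>1, \<mu>1, v1) (\<Sigma>2, \<mu>2, v2) \<longleftrightarrow>
     store_eq A \<beta> \<Sigma>1 \<Sigma>2 \<and> heap_eq A \<beta> \<mu>1 \<mu>2 \<and> veq A \<beta> v1 v2"

fun vvalid :: "nat \<Rightarrow> 'l vl \<Rightarrow> bool"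
and rvalid :: "nat \<Rightarrow> 'l raw \<Rightarrow> bool" where
  "vvalid n (Val r l) \<longleftrightarrow> rvalid n r"
| "rvalid n RUnit \<longleftrightarrow> True"
| "rvalid n (Clos e \<theta>) \<longleftrightarrow> (\<forall>v\<in>set \<theta>. vvalid n v)"
| "rvalid n (RInl v) \<longleftrightarrow> vvalid n v"
| "rvalid n (RInr v) \<longleftrightarrow> vvalid n v"
| "rvalid n (RPair v w) \<longleftrightarrow> vvalid n v \<and> vvalid n w"
| "rvalid n (RLbl l) \<longleftrightarrow> True"
| "rvalid n (RRefI l m) \<longleftrightarrow> True"
| "rvalid n (RRefS m) \<longleftrightarrow> m < n"

fun valid_init :: "'l iconf \<Rightarrow> 'l env \<Rightarrow> bool" where
  "valid_init (\<Sigma>, \<mu>, e) \<theta> \<longleftrightarrow>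
     (let n = length \<mu> in
        (\<forall>l. \<forall>r\<in>set (\<Sigma> l). rvalid n r) \<and> (\<forall>v\<in>set \<mu>. vvalid n v) \<and> (\<forall>v\<in>set \<theta>. vvalid n v))"

end

theory Submission
  imports Defs
begin

lemma list_all2_mono_set:
  "list_all2 P xs ys \<Longrightarrow> (\<And>x y. x \<in> set xs \<Longrightarrow> P x y \<Longrightarrow> Q x y) \<Longrightarrow> list_all2 Q xs ys"
  by (auto simp: list_all2_conv_all_nth)

lemma veq_req_mono:
  fixes A :: "'l::semilattice_sup"
  assumes "\<beta> \<subseteq>\<^sub>m \<beta>'"
  shows "(\<forall>w. veq A \<beta> v w \<longrightarrow> veq A \<beta>' v w)"
    "(\<forall>r'. req A \<beta> r r' \<longrightarrow> req A \<beta>' r r')"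
proof (induction v and r)
  case (Val r l)
  then show ?case by (intro allI; case_tac w; auto)
next
  case (Clos e th)
  then show ?case
    apply (intro allI impI)
    subgoal for r' by (cases r'; auto elim!: list_all2_mono_set)
    done
next
  case (RRefS n) then show ?case using assms
    apply (intro allI impI)
    subgoal for r' by (cases r'; auto simp: map_le_def dom_def)
    done
qed (intro allI impI; case_tac r'; auto)+

lemma veq_mono: "veq A \<beta> v w \<Longrightarrow> \<beta> \<subseteq>\<^sub>m \<beta>' \<Longrightarrow> veq A \<beta>' v w"
  using veq_req_mono(1)[of \<beta> \<beta>' A v] by simp

lemma req_mono: "req A \<beta> v w \<Longrightarrow> \<beta> \<subseteq>\<^sub>m \<beta>' \<Longrightarrow> req A \<beta>' v w"
  using veq_req_mono(2)[of \<beta> \<beta>' A v] by simp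

lemma env_eq_mono: "env_eq A \<beta> v w \<Longrightarrow> \<beta> \<subseteq>\<^sub>m \<beta>' \<Longrightarrow> env_eq A \<beta>' v w"
  unfolding env_eq_def by (erule list_all2_mono) (erule veq_mono)

lemma store_eq_mono: "store_eq A \<beta> v w \<Longrightarrow> \<beta> \<subseteq>\<^sub>m \<beta>' \<Longrightarrow> store_eq A \<beta>' v w"
  unfolding store_eq_def mem_eq_def
proof (intro allI)
  fix l assume H: "\<forall>l. \<not> l \<le> A \<or> list_all2 (req A \<beta>) (v l) (w l)" "\<beta> \<subseteq>\<^sub>m \<beta>'"
  then show "\<not> l \<le> A \<or> list_all2 (req A \<beta>') (v l) (w l)"
    by (metis list_all2_mono req_mono)
qed

fun lab :: "'l vl \<Rightarrow> 'l" where "lab (Val r l) = l"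

lemma lab_vjoin: "lab (vjoin v l) = sup (lab v) l"
  by (cases v) auto

lemma veq_lab_iff: "veq A \<beta> v w \<Longrightarrow> (lab v \<le> A \<longleftrightarrow> lab w \<le> A)"
  by (cases v; cases w) auto

lemma veq_lab_eq: "veq A \<beta> v w \<Longrightarrow> lab v \<le> A \<Longrightarrow> lab w = lab v"
  by (cases v; cases w) auto

lemma veq_high: "\<not> lab v \<le> A \<Longrightarrow> \<not> lab w \<le> A \<Longrightarrow> veq A \<beta> v w"
  by (cases v; cases w) auto

lemma veq_sameI: "(l \<le> A \<Longrightarrow> req A \<beta> r1 r2) \<Longrightarrow> veq A \<beta> (Val r1 l) (Val r2 l)"
  by auto

lemma high_up: "\<not> (a::'l::semilattice_sup) \<le> A \<Longrightarrow> a \<le> b \<Longrightarrow> \<not> b \<le> A"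
  using order_trans by blast

lemma veq_vjoin: "veq A \<beta> v w \<Longrightarrow> veq A \<beta> (vjoin v l) (vjoin w l)"
proof (cases v; cases w)
  fix r1 l1 r2 l2 assume v: "v = Val r1 l1" and w: "w = Val r2 l2" and e: "veq A \<beta> v w"
  show ?thesis
  proof (cases "l1 \<le> A")
    case True
    then have "l1 = l2" "req A \<beta> r1 r2" using e v w by auto
    then show ?thesis using v w by auto
  next
    case False
    then have "\<not> l2 \<le> A" using e v w by auto
    then show ?thesis using v w False by (auto dest: high_up[of _ A "sup _ l"])
  qed
qed


definition hpres :: "'l::semilattice_sup \<Rightarrow> 'l heap \<Rightarrow> 'l heap \<Rightarrow> bool" where
  "hpres A \<mu> \<mu>' \<longleftrightarrow> length \<mu> \<le> length \<mu>' \<and>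
     (\<forall>n<length \<mu>. \<mu>' ! n = \<mu> ! n \<or> (\<not> lab (\<mu> ! n) \<le> A \<and> \<not> lab (\<mu>' ! n) \<le> A))"

definition spres :: "'l::semilattice_sup \<Rightarrow> 'l store \<Rightarrow> 'l store \<Rightarrow> bool" where
  "spres A \<Sigma> \<Sigma>' \<longleftrightarrow> (\<forall>l. l \<le> A \<longrightarrow> \<Sigma>' l = \<Sigma> l)"

lemma hpres_refl: "hpres A \<mu> \<mu>" by (simp add: hpres_def)
lemma spres_refl: "spres A \<Sigma> \<Sigma>" by (simp add: spres_def)

lemma hpres_trans: "hpres A a b \<Longrightarrow> hpres A b c \<Longrightarrow> hpres A a c"
  unfolding hpres_def
proof (intro conjI allI impI)
  assume H: "length a \<le> length b \<and> (\<forall>n<length a. b ! n = a ! n \<or> \<not> lab (a ! n) \<le> A \<and> \<not> lab (b ! n) \<le> A)"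
     "length b \<le> length c \<and> (\<forall>n<length b. c ! n = b ! n \<or> \<not> lab (b ! n) \<le> A \<and> \<not> lab (c ! n) \<le> A)"
  then show "length a \<le> length c" by linarith
  fix n assume n: "n < length a"
  then have n': "n < length b" using H by linarith
  have 1: "b ! n = a ! n \<or> \<not> lab (a ! n) \<le> A \<and> \<not> lab (b ! n) \<le> A" using H n by blast
  have 2: "c ! n = b ! n \<or> \<not> lab (b ! n) \<le> A \<and> \<not> lab (c ! n) \<le> A" using H n' by blast
  show "c ! n = a ! n \<or> \<not> lab (a ! n) \<le> A \<and> \<not> lab (c ! n) \<le> A"
    using 1 2 by auto
qed

lemma spres_trans: "spres A a b \<Longrightarrow> spres A b c \<Longrightarrow> spres A a c"
  unfolding spres_def by simp

lemma store_eq_pres: "store_eq A \<beta> S1 S2 \<Longrightarrow> spres A S1 S1' \<Longrightarrow> spres A S2 S2' \<Longrightarrow> store_eq A \<beta> S1' S2'"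
  unfolding store_eq_def spres_def mem_eq_def by metis

lemma heap_eq_pres:
  assumes "heap_eq A \<beta> m1 m2" "hpres A m1 m1'" "hpres A m2 m2'"
  shows "heap_eq A \<beta> m1' m2'"
  unfolding heap_eq_def
proof (intro conjI allI impI)
  show "dom \<beta> \<subseteq> {..<length m1'}" using assms unfolding heap_eq_def hpres_def by auto
  show "ran \<beta> \<subseteq> {..<length m2'}" using assms unfolding heap_eq_def hpres_def by auto
  fix n1 n2 assume b: "\<beta> n1 = Some n2"
  have n1: "n1 < length m1" and n2: "n2 < length m2" and v: "veq A \<beta> (m1 ! n1) (m2 ! n2)"
    using assms(1) b unfolding heap_eq_def by (auto simp: dom_def ran_def)
  have h1: "m1' ! n1 = m1 ! n1 \<or> (\<not> lab (m1 ! n1) \<le> A \<and> \<not> lab (m1' ! n1) \<le> A)"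
    using assms(2) n1 unfolding hpres_def by blast
  have h2: "m2' ! n2 = m2 ! n2 \<or> (\<not> lab (m2 ! n2) \<le> A \<and> \<not> lab (m2' ! n2) \<le> A)"
    using assms(3) n2 unfolding hpres_def by blast
  show "veq A \<beta> (m1' ! n1) (m2' ! n2)"
  proof (cases "m1' ! n1 = m1 ! n1 \<and> m2' ! n2 = m2 ! n2")
    case True then show ?thesis using v by simp
  next
    case False
    have l: "lab (m1 ! n1) \<le> A \<longleftrightarrow> lab (m2 ! n2) \<le> A" by (rule veq_lab_iff[OF v])
    have "\<not> lab (m1' ! n1) \<le> A \<and> \<not> lab (m2' ! n2) \<le> A"
      using False h1 h2 l by metis
    then show ?thesis by (simp add: veq_high)
  qed
qed

lemma lupd_append: "lupd X (length X) y = X @ [y]" by (simp add: lupd_def)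
lemma lupd_upd: "n < length X \<Longrightarrow> lupd X n y = X[n := y]" by (simp add: lupd_def)

lemma eval_pc: "eval \<theta> pc c c' \<Longrightarrow> pc \<le> lab (snd (snd c'))"
proof (induction rule: eval.induct)
  case (EVar i \<theta> pc \<Sigma> \<mu>) then show ?case by (simp add: lab_vjoin)
next
  case (EFst \<theta> pc \<Sigma> \<mu> e \<Sigma>' \<mu>' v1 v2 l) then show ?case by (auto simp: lab_vjoin intro: le_supI2)
next
  case (ESnd \<theta> pc \<Sigma> \<mu> e \<Sigma>' \<mu>' v1 v2 l) then show ?case by (auto simp: lab_vjoin intro: le_supI2)
next
  case (ETaint \<theta> pc \<Sigma> \<mu> e1 \<Sigma>1 \<mu>1 l l' e2 c') then show ?case by (auto intro: order_trans)
qed (simp_all add: le_supI1 le_supI2)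


lemma high_sup: "\<not> (a::'l::semilattice_sup) \<le> A \<Longrightarrow> \<not> sup a b \<le> A"
  by (simp add: le_sup_iff)
lemma high_sup2: "\<not> (a::'l::semilattice_sup) \<le> A \<Longrightarrow> \<not> sup b a \<le> A"
  by (simp add: le_sup_iff)

lemma spres_upd: "\<not> l \<le> A \<Longrightarrow> spres A \<Sigma> (\<Sigma>(l := m))"
  unfolding spres_def by auto

lemma hpres_app: "hpres A \<mu> (\<mu> @ [v])"
  unfolding hpres_def by (auto simp: nth_append)

lemma hpres_upd: "n < length \<mu> \<Longrightarrow> \<not> lab (\<mu> ! n) \<le> A \<Longrightarrow> \<not> lab v \<le> A \<Longrightarrow> hpres A \<mu> (\<mu>[n := v])"
  unfolding hpres_def by (auto simp: nth_list_update)

lemma confine: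
  "eval \<theta> pc c c' \<Longrightarrow> \<not> pc \<le> A \<Longrightarrow> spres A (fst c) (fst c') \<and> hpres A (fst (snd c)) (fst (snd c'))"
proof (induction rule: eval.induct)
  case (EApp \<theta> pc \<Sigma> \<mu> e1 \<Sigma>1 \<mu>1 e \<theta>' l e2 \<Sigma>2 \<mu>2 v2 c')
  have "\<not> sup pc l \<le> A" using EApp.prems by (rule high_sup)
  then show ?case using EApp by (metis fst_conv snd_conv spres_trans hpres_trans)
next
  case (ECaseL \<theta> pc \<Sigma> \<mu> e \<Sigma>1 \<mu>1 v1 l e1 c' e2)
  have "\<not> sup pc l \<le> A" using ECaseL.prems by (rule high_sup)
  then show ?case using ECaseL by (metis fst_conv snd_conv spres_trans hpres_trans)
next
  case (ECaseR \<theta> pc \<Sigma> \<mu> e \<Sigma>1 \<mu>1 v1 l e2 c' e1)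
  have "\<not> sup pc l \<le> A" using ECaseR.prems by (rule high_sup)
  then show ?case using ECaseR by (metis fst_conv snd_conv spres_trans hpres_trans)
next
  case (EPair \<theta> pc \<Sigma> \<mu> e1 \<Sigma>1 \<mu>1 v1 e2 \<Sigma>2 \<mu>2 v2)
  then show ?case by (metis fst_conv snd_conv spres_trans hpres_trans)
next
  case (ECmpT \<theta> pc \<Sigma> \<mu> e1 \<Sigma>1 \<mu>1 l1 l1' e2 \<Sigma>2 \<mu>2 l2 l2')
  then show ?case by (metis fst_conv snd_conv spres_trans hpres_trans)
next
  case (ECmpF \<theta> pc \<Sigma> \<mu> e1 \<Sigma>1 \<mu>1 l1 l1' e2 \<Sigma>2 \<mu>2 l2 l2')
  then show ?case by (metis fst_conv snd_conv spres_trans hpres_trans)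
next
  case (ETaint \<theta> pc \<Sigma> \<mu> e1 \<Sigma>1 \<mu>1 l l' e2 c')
  have "pc \<le> l'" using eval_pc[OF ETaint.hyps(1)] by simp
  then have "\<not> l \<le> A" using ETaint by (meson high_up)
  then show ?case using ETaint by (metis fst_conv snd_conv spres_trans hpres_trans)
next
  case (ENew \<theta> pc \<Sigma> \<mu> e \<Sigma>' \<mu>' r l n)
  have "pc \<le> l" using eval_pc[OF ENew.hyps(1)] by simp
  then have "\<not> l \<le> A" using ENew by (meson high_up)
  then show ?case using ENew by (metis fst_conv snd_conv spres_trans spres_upd)
next
  case (EWrite \<theta> pc \<Sigma> \<mu> e1 \<Sigma>1 \<mu>1 l n l1 e2 \<Sigma>2 \<mu>2 r l2)
  have "pc \<le> l1" using eval_pc[OF EWrite.hyps(1)] by simp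
  then have "\<not> l \<le> A" using EWrite by (meson high_up order_trans)
  then show ?case using EWrite by (metis fst_conv snd_conv spres_trans spres_upd hpres_trans)
next
  case (ENewFS \<theta> pc \<Sigma> \<mu> e \<Sigma>' \<mu>' v n)
  then show ?case by (metis fst_conv snd_conv hpres_trans hpres_app lupd_append)
next
  case (EWriteFS \<theta> pc \<Sigma> \<mu> e1 \<Sigma>1 \<mu>1 n l e2 \<Sigma>2 \<mu>2 r2 l2 r1 l1)
  have "pc \<le> l" using eval_pc[OF EWriteFS.hyps(1)] by simp
  then have hl: "\<not> l \<le> A" using EWriteFS by (meson high_up)
  then have "\<not> l1 \<le> A" using EWriteFS by (meson high_up)
  then have "hpres A \<mu>2 (lupd \<mu>2 n (Val r2 (sup l2 l)))"
    using EWriteFS hl by (simp add: lupd_upd hpres_upd high_sup2)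
  then show ?case using EWriteFS by (metis fst_conv snd_conv spres_trans hpres_trans)
qed (simp_all add: spres_refl hpres_refl)

lemma high:
  assumes "eval \<theta>1 pc1 (S1, m1, e1) c1'" "eval \<theta>2 pc2 (S2, m2, e2) c2'"
    "\<not> pc1 \<le> A" "\<not> pc2 \<le> A" "store_eq A \<beta> S1 S2" "heap_eq A \<beta> m1 m2"
  shows "fconf_eq A \<beta> c1' c2'"
proof -
  obtain S1' m1' v1 where c1: "c1' = (S1', m1', v1)" by (cases c1') auto
  obtain S2' m2' v2 where c2: "c2' = (S2', m2', v2)" by (cases c2') auto
  have p1: "spres A S1 S1'" "hpres A m1 m1'" using confine[OF assms(1) assms(3)] c1 by auto
  have p2: "spres A S2 S2'" "hpres A m2 m2'" using confine[OF assms(2) assms(4)] c2 by auto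
  have "pc1 \<le> lab v1" using eval_pc[OF assms(1)] c1 by simp
  then have h1: "\<not> lab v1 \<le> A" using assms(3) high_up by blast
  have "pc2 \<le> lab v2" using eval_pc[OF assms(2)] c2 by simp
  then have h2: "\<not> lab v2 \<le> A" using assms(4) high_up by blast
  show ?thesis using c1 c2 store_eq_pres[OF assms(5) p1(1) p2(1)] heap_eq_pres[OF assms(6) p1(2) p2(2)]
      veq_high[OF h1 h2] by simp
qed


inductive_cases VarE: "eval \<theta> pc (\<Sigma>, \<mu>, Var i) c'"
inductive_cases UnitE: "eval \<theta> pc (\<Sigma>, \<mu>, Unit) c'"
inductive_cases LblE: "eval \<theta> pc (\<Sigma>, \<mu>, Lbl l) c'"
inductive_cases LamE: "eval \<theta> pc (\<Sigma>, \<mu>, Lam e) c'"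
inductive_cases GetLabelE: "eval \<theta> pc (\<Sigma>, \<mu>, GetLabel) c'"
inductive_cases AppE: "eval \<theta> pc (\<Sigma>, \<mu>, App e1 e2) c'"
inductive_cases InlE: "eval \<theta> pc (\<Sigma>, \<mu>, Inl e) c'"
inductive_cases InrE: "eval \<theta> pc (\<Sigma>, \<mu>, Inr e) c'"
inductive_cases CaseE: "eval \<theta> pc (\<Sigma>, \<mu>, Case e e1 e2) c'"
inductive_cases PairE: "eval \<theta> pc (\<Sigma>, \<mu>, Pair e1 e2) c'"
inductive_cases FstE: "eval \<theta> pc (\<Sigma>, \<mu>, Fst e) c'"
inductive_cases SndE: "eval \<theta> pc (\<Sigma>, \<mu>, Snd e) c'"
inductive_cases LabelOfE: "eval \<theta> pc (\<Sigma>, \<mu>, LabelOf e) c'"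
inductive_cases CmpE: "eval \<theta> pc (\<Sigma>, \<mu>, Cmp e1 e2) c'"
inductive_cases TaintE: "eval \<theta> pc (\<Sigma>, \<mu>, Taint e1 e2) c'"
inductive_cases NewIE: "eval \<theta> pc (\<Sigma>, \<mu>, New I e) c'"
inductive_cases ReadIE: "eval \<theta> pc (\<Sigma>, \<mu>, Read I e) c'"
inductive_cases WriteIE: "eval \<theta> pc (\<Sigma>, \<mu>, Write I e1 e2) c'"
inductive_cases LabelOfRefIE: "eval \<theta> pc (\<Sigma>, \<mu>, LabelOfRef I e) c'"
inductive_cases NewSE: "eval \<theta> pc (\<Sigma>, \<mu>, New S e) c'"
inductive_cases ReadSE: "eval \<theta> pc (\<Sigma>, \<mu>, Read S e) c'"
inductive_cases WriteSE: "eval \<theta> pc (\<Sigma>, \<mu>, Write S e1 e2) c'"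
inductive_cases LabelOfRefSE: "eval \<theta> pc (\<Sigma>, \<mu>, LabelOfRef S e) c'"

lemma list_all2_lupd:
  "list_all2 P xs ys \<Longrightarrow> P x y \<Longrightarrow> list_all2 P (lupd xs n x) (lupd ys n y)"
  unfolding lupd_def
  by (auto simp: list_all2_lengthD list_all2_update_cong list_all2_appendI)

lemma store_eq_upd:
  assumes "store_eq A \<beta> S1 S2" "l1 \<le> A \<longleftrightarrow> l2 \<le> A"
    "l1 \<le> A \<Longrightarrow> l1 = l2 \<and> list_all2 (req A \<beta>) m1 m2"
  shows "store_eq A \<beta> (S1(l1 := m1)) (S2(l2 := m2))"
  using assms unfolding store_eq_def mem_eq_def by auto

lemma refI_lab:
  assumes "veq A \<beta> (Val (RRefI l n) l') (Val (RRefI m k) m')"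
  shows "(sup l l' \<le> A \<longrightarrow> m = l \<and> m' = l' \<and> k = n) \<and> (\<not> sup l l' \<le> A \<longrightarrow> \<not> sup m m' \<le> A)"
  using assms by (auto simp: le_sup_iff)

lemma cmp_veq:
  assumes "veq A \<beta> (Val (RLbl l1) l1') (Val (RLbl m1) m1')"
    "veq A \<beta> (Val (RLbl l2) l2') (Val (RLbl m2) m2')"
  shows "veq A \<beta> (Val (if l1 \<le> l2 then RInl (Val RUnit pc) else RInr (Val RUnit pc)) (sup l1' l2'))
                  (Val (if m1 \<le> m2 then RInl (Val RUnit pc) else RInr (Val RUnit pc)) (sup m1' m2'))"
proof (cases "sup l1' l2' \<le> A")
  case True
  then have "l1' \<le> A" "l2' \<le> A" by (auto simp: le_sup_iff)
  then have "m1 = l1" "m1' = l1'" "m2 = l2" "m2' = l2'" using assms by auto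
  then show ?thesis using True by auto
next
  case False
  then have "\<not> sup m1' m2' \<le> A" using assms by (auto simp: le_sup_iff)
  then show ?thesis using False by simp
qed

lemma heap_eq_alloc:
  assumes "heap_eq A \<beta> m1 m2" "veq A \<beta> v w"
  shows "heap_eq A (\<beta>(length m1 \<mapsto> length m2)) (m1 @ [v]) (m2 @ [w])"
    and "\<beta> \<subseteq>\<^sub>m \<beta>(length m1 \<mapsto> length m2)"
proof -
  have nd: "length m1 \<notin> dom \<beta>" using assms(1) unfolding heap_eq_def by auto
  show le: "\<beta> \<subseteq>\<^sub>m \<beta>(length m1 \<mapsto> length m2)"
    using nd unfolding map_le_def by auto
  show "heap_eq A (\<beta>(length m1 \<mapsto> length m2)) (m1 @ [v]) (m2 @ [w])"
    unfolding heap_eq_def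
  proof (intro conjI allI impI)
    show "dom (\<beta>(length m1 \<mapsto> length m2)) \<subseteq> {..<length (m1 @ [v])}"
      using assms(1) unfolding heap_eq_def by auto
    have "ran (\<beta>(length m1 \<mapsto> length m2)) \<subseteq> ran \<beta> \<union> {length m2}"
      by (metis ran_map_upd_Some Un_commute insert_is_Un subset_refl ran_map_upd nd domIff Un_upper1)
    then show "ran (\<beta>(length m1 \<mapsto> length m2)) \<subseteq> {..<length (m2 @ [w])}"
      using assms(1) unfolding heap_eq_def by auto
    fix n1 n2 assume b: "(\<beta>(length m1 \<mapsto> length m2)) n1 = Some n2"
    show "veq A (\<beta>(length m1 \<mapsto> length m2)) ((m1 @ [v]) ! n1) ((m2 @ [w]) ! n2)"
    proof (cases "n1 = length m1")
      case True
      then have "n2 = length m2" using b by simp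
      then show ?thesis using True veq_mono[OF assms(2) le] by simp
    next
      case False
      then have b': "\<beta> n1 = Some n2" using b by simp
      then have "n1 < length m1" "n2 < length m2" "veq A \<beta> (m1 ! n1) (m2 ! n2)"
        using assms(1) unfolding heap_eq_def by (auto simp: dom_def ran_def)
      then show ?thesis using veq_mono[OF _ le] by (simp add: nth_append)
    qed
  qed
qed

lemma pbij_alloc:
  assumes "pbij \<beta>" "heap_eq A \<beta> m1 m2"
  shows "pbij (\<beta>(length m1 \<mapsto> length m2))"
proof -
  have nd: "length m1 \<notin> dom \<beta>" and nr: "length m2 \<notin> ran \<beta>" using assms(2) unfolding heap_eq_def by auto
  have "finite (dom (\<beta>(length m1 \<mapsto> length m2)))" using assms(1) unfolding pbij_def by simp
  moreover have "inj_on (\<beta>(length m1 \<mapsto> length m2)) (dom (\<beta>(length m1 \<mapsto> length m2)))"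
    using assms(1) nd nr unfolding pbij_def inj_on_def by (auto simp: ran_def dom_def)
  ultimately show ?thesis unfolding pbij_def by blast
qed

lemma heap_eq_write:
  assumes "pbij \<beta>" "heap_eq A \<beta> m1 m2" "\<beta> n = Some n'" "veq A \<beta> v w"
  shows "heap_eq A \<beta> (m1[n := v]) (m2[n' := w])"
  unfolding heap_eq_def
proof (intro conjI allI impI)
  show "dom \<beta> \<subseteq> {..<length (m1[n := v])}" using assms(2) unfolding heap_eq_def by auto
  show "ran \<beta> \<subseteq> {..<length (m2[n' := w])}" using assms(2) unfolding heap_eq_def by auto
  have n1: "n < length m1" and n2: "n' < length m2" using assms(2,3) unfolding heap_eq_def
    by (auto simp: dom_def ran_def)
  fix a b assume b: "\<beta> a = Some b"
  have a1: "a < length m1" and b2: "b < length m2" and v: "veq A \<beta> (m1 ! a) (m2 ! b)"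
    using assms(2) b unfolding heap_eq_def by (auto simp: dom_def ran_def)
  show "veq A \<beta> (m1[n := v] ! a) (m2[n' := w] ! b)"
  proof (cases "a = n")
    case True
    then have "b = n'" using b assms(3) by simp
    then show ?thesis using True n1 n2 assms(4) by simp
  next
    case False
    have "b \<noteq> n'"
    proof
      assume "b = n'"
      then have "\<beta> a = \<beta> n" using b assms(3) by simp
      then show False using False assms(1) b unfolding pbij_def inj_on_def by (metis domIff option.discI)
    qed
    then show ?thesis using False v by simp
  qed
qed


lemma refI_write:
  assumes "veq A \<beta> (Val (RRefI l n) l1) (Val (RRefI m k) m1)" "l1 \<le> l" "m1 \<le> m"
  shows "(l \<le> A \<longleftrightarrow> m \<le> A) \<and> (l \<le> A \<longrightarrow> m = l \<and> k = n)"
proof (cases "l1 \<le> A")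
  case True
  then have "m1 = l1" "(l = m \<and> l \<le> A \<and> n = k) \<or> (\<not> l \<le> A \<and> \<not> m \<le> A)" using assms(1) by auto
  then show ?thesis by auto
next
  case False
  then have "\<not> m1 \<le> A" using assms(1) by auto
  then have "\<not> m \<le> A" using assms(3) high_up by blast
  moreover have "\<not> l \<le> A" using False assms(2) high_up by blast
  ultimately show ?thesis by simp
qed

lemma main:
  "eval \<theta>1 pc (\<Sigma>1, \<mu>1, e) c1' \<Longrightarrow> pbij \<beta> \<Longrightarrow> store_eq A \<beta> \<Sigma>1 \<Sigma>2 \<Longrightarrow> heap_eq A \<beta> \<mu>1 \<mu>2
   \<Longrightarrow> env_eq A \<beta> \<theta>1 \<theta>2 \<Longrightarrow> eval \<theta>2 pc (\<Sigma>2, \<mu>2, e) c2'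
   \<Longrightarrow> \<exists>\<beta>'. pbij \<beta>' \<and> \<beta> \<subseteq>\<^sub>m \<beta>' \<and> fconf_eq A \<beta>' c1' c2'"
proof (induction \<theta>1 pc "(\<Sigma>1, \<mu>1, e)" c1' arbitrary: \<Sigma>1 \<mu>1 e \<beta> \<theta>2 \<Sigma>2 \<mu>2 c2' rule: eval.induct)
  case (EVar i \<theta> pc \<Sigma> \<mu> \<beta> \<theta>2 S2 m2 c2')
  have c2: "c2' = (S2, m2, vjoin (\<theta>2 ! i) pc)" using EVar.prems(5) by (blast elim: VarE)
  have "veq A \<beta> (\<theta> ! i) (\<theta>2 ! i)" using EVar.prems(4) EVar.hyps unfolding env_eq_def
    by (simp add: list_all2_nthD)
  then show ?case using EVar.prems c2 veq_vjoin by (auto intro!: exI[of _ \<beta>])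
next
  case (EUnit \<theta> pc \<Sigma> \<mu> \<beta> \<theta>2 S2 m2 c2')
  have c2: "c2' = (S2, m2, Val RUnit pc)" using EUnit.prems(5) by (blast elim: UnitE)
  then show ?case using EUnit.prems by (auto intro!: exI[of _ \<beta>])
next
  case (ELabel \<theta> pc \<Sigma> \<mu> l \<beta> \<theta>2 S2 m2 c2')
  have c2: "c2' = (S2, m2, Val (RLbl l) pc)" using ELabel.prems(5) by (blast elim: LblE)
  then show ?case using ELabel.prems by (auto intro!: exI[of _ \<beta>])
next
  case (EFun \<theta> pc \<Sigma> \<mu> e \<beta> \<theta>2 S2 m2 c2')
  have c2: "c2' = (S2, m2, Val (Clos e \<theta>2) pc)" using EFun.prems(5) by (blast elim: LamE)
  then show ?case using EFun.prems by (auto intro!: exI[of _ \<beta>] simp: env_eq_def)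
next
  case (EGetLabel \<theta> pc \<Sigma> \<mu> \<beta> \<theta>2 S2 m2 c2')
  have c2: "c2' = (S2, m2, Val (RLbl pc) pc)" using EGetLabel.prems(5) by (blast elim: GetLabelE)
  then show ?case using EGetLabel.prems by (auto intro!: exI[of _ \<beta>])
next
  case (EApp \<theta> pc \<Sigma> \<mu> e1 \<Sigma>a \<mu>a e \<theta>' l e2 \<Sigma>b \<mu>b v2 c' \<beta> \<theta>2 S2 m2 c2')
  obtain S2a m2a ee \<theta>'' l'' S2b m2b v2' where
    r1: "eval \<theta>2 pc (S2, m2, e1) (S2a, m2a, Val (Clos ee \<theta>'') l'')" and
    r2: "eval \<theta>2 pc (S2a, m2a, e2) (S2b, m2b, v2')" and
    r3: "eval (v2' # \<theta>'') (sup pc l'') (S2b, m2b, ee) c2'"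
    using EApp.prems(5) by (blast elim: AppE)
  obtain \<beta>1 where b1: "pbij \<beta>1" "\<beta> \<subseteq>\<^sub>m \<beta>1"
    and f1: "fconf_eq A \<beta>1 (\<Sigma>a, \<mu>a, Val (Clos e \<theta>') l) (S2a, m2a, Val (Clos ee \<theta>'') l'')"
    using EApp.hyps(2)[OF EApp.prems(1-4) r1] by blast
  obtain \<beta>2 where b2: "pbij \<beta>2" "\<beta>1 \<subseteq>\<^sub>m \<beta>2"
    and f2: "fconf_eq A \<beta>2 (\<Sigma>b, \<mu>b, v2) (S2b, m2b, v2')"
    using EApp.hyps(4)[OF b1(1) _ _ env_eq_mono[OF EApp.prems(4) b1(2)] r2] f1 by auto
  have "veq A \<beta>1 (Val (Clos e \<theta>') l) (Val (Clos ee \<theta>'') l'')"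
    using f1 by simp
  then have v1: "veq A \<beta>2 (Val (Clos e \<theta>') l) (Val (Clos ee \<theta>'') l'')"
    by (rule veq_mono[OF _ b2(2)])
  show ?case
  proof (cases "l \<le> A")
    case True
    then have "l'' = l" "ee = e" "list_all2 (veq A \<beta>2) \<theta>' \<theta>''" using v1 by auto
    then have env: "env_eq A \<beta>2 (v2 # \<theta>') (v2' # \<theta>'')" and r3': "eval (v2' # \<theta>'') (sup pc l) (S2b, m2b, e) c2'"
      using f2 r3 by (auto simp: env_eq_def)
    obtain \<beta>3 where "pbij \<beta>3" "\<beta>2 \<subseteq>\<^sub>m \<beta>3" "fconf_eq A \<beta>3 c' c2'"
      using EApp.hyps(6)[OF b2(1) _ _ env r3'] f2 by auto
    then show ?thesis using b1 b2 by (meson map_le_trans)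
  next
    case False
    then have "\<not> l'' \<le> A" using v1 by auto
    then have "fconf_eq A \<beta>2 c' c2'"
      using high[OF EApp.hyps(5) r3 high_sup2[OF False] high_sup2] f2 by auto
    then show ?thesis using b1 b2 by (meson map_le_trans)
  qed
next
  case (EInl \<theta> pc \<Sigma> \<mu> e \<Sigma>' \<mu>' v \<beta> \<theta>2 S2 m2 c2')
  obtain S2' m2' v' where r1: "eval \<theta>2 pc (S2, m2, e) (S2', m2', v')" and c2: "c2' = (S2', m2', Val (RInl v') pc)"
    using EInl.prems(5) by (blast elim: InlE)
  obtain \<beta>1 where "pbij \<beta>1" "\<beta> \<subseteq>\<^sub>m \<beta>1" "fconf_eq A \<beta>1 (\<Sigma>', \<mu>', v) (S2', m2', v')"
    using EInl.hyps(2)[OF EInl.prems(1-4) r1] by blast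
  then show ?case using c2 by auto
next
  case (EInr \<theta> pc \<Sigma> \<mu> e \<Sigma>' \<mu>' v \<beta> \<theta>2 S2 m2 c2')
  obtain S2' m2' v' where r1: "eval \<theta>2 pc (S2, m2, e) (S2', m2', v')" and c2: "c2' = (S2', m2', Val (RInr v') pc)"
    using EInr.prems(5) by (blast elim: InrE)
  obtain \<beta>1 where "pbij \<beta>1" "\<beta> \<subseteq>\<^sub>m \<beta>1" "fconf_eq A \<beta>1 (\<Sigma>', \<mu>', v) (S2', m2', v')"
    using EInr.hyps(2)[OF EInr.prems(1-4) r1] by blast
  then show ?case using c2 by auto
next
  case (ECaseL \<theta> pc \<Sigma> \<mu> e \<Sigma>a \<mu>a v1 l e1 c' e2 \<beta> \<theta>2 S2 m2 c2')
  have "(\<exists>S2a m2a w l''. eval \<theta>2 pc (S2, m2, e) (S2a, m2a, Val (RInl w) l'') \<and>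
           eval (w # \<theta>2) (sup pc l'') (S2a, m2a, e1) c2') \<or>
        (\<exists>S2a m2a w l''. eval \<theta>2 pc (S2, m2, e) (S2a, m2a, Val (RInr w) l'') \<and>
           eval (w # \<theta>2) (sup pc l'') (S2a, m2a, e2) c2')"
    using ECaseL.prems(5) by (blast elim: CaseE)
  then show ?case
  proof (elim disjE exE conjE)
    fix S2a m2a w l''
    assume r1: "eval \<theta>2 pc (S2, m2, e) (S2a, m2a, Val (RInl w) l'')"
      and r2: "eval (w # \<theta>2) (sup pc l'') (S2a, m2a, e1) c2'"
    obtain \<beta>1 where b1: "pbij \<beta>1" "\<beta> \<subseteq>\<^sub>m \<beta>1"
      and f1: "fconf_eq A \<beta>1 (\<Sigma>a, \<mu>a, Val (RInl v1) l) (S2a, m2a, Val (RInl w) l'')"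
      using ECaseL.hyps(2)[OF ECaseL.prems(1-4) r1] by blast
    show ?thesis
    proof (cases "l \<le> A")
      case True
      then have "l'' = l" "veq A \<beta>1 v1 w" using f1 by auto
      then have env: "env_eq A \<beta>1 (v1 # \<theta>) (w # \<theta>2)" and r2': "eval (w # \<theta>2) (sup pc l) (S2a, m2a, e1) c2'"
        using r2 env_eq_mono[OF ECaseL.prems(4) b1(2)] by (auto simp: env_eq_def)
      obtain \<beta>2 where "pbij \<beta>2" "\<beta>1 \<subseteq>\<^sub>m \<beta>2" "fconf_eq A \<beta>2 c' c2'"
        using ECaseL.hyps(4)[OF b1(1) _ _ env r2'] f1 by auto
      then show ?thesis using b1 by (meson map_le_trans)
    next
      case False
      then have "\<not> l'' \<le> A" using f1 by auto
      then have "fconf_eq A \<beta>1 c' c2'"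
        using high[OF ECaseL.hyps(3) r2 high_sup2[OF False] high_sup2] f1 by auto
      then show ?thesis using b1 by blast
    qed
  next
    fix S2a m2a w l''
    assume r1: "eval \<theta>2 pc (S2, m2, e) (S2a, m2a, Val (RInr w) l'')"
      and r2: "eval (w # \<theta>2) (sup pc l'') (S2a, m2a, e2) c2'"
    obtain \<beta>1 where b1: "pbij \<beta>1" "\<beta> \<subseteq>\<^sub>m \<beta>1"
      and f1: "fconf_eq A \<beta>1 (\<Sigma>a, \<mu>a, Val (RInl v1) l) (S2a, m2a, Val (RInr w) l'')"
      using ECaseL.hyps(2)[OF ECaseL.prems(1-4) r1] by blast
    then have False': "\<not> l \<le> A" "\<not> l'' \<le> A" by auto
    then have "fconf_eq A \<beta>1 c' c2'"
      using high[OF ECaseL.hyps(3) r2 high_sup2[OF False'(1)] high_sup2[OF False'(2)]] f1 by auto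
    then show ?thesis using b1 by blast
  qed
next
  case (ECaseR \<theta> pc \<Sigma> \<mu> e \<Sigma>a \<mu>a v1 l e2 c' e1 \<beta> \<theta>2 S2 m2 c2')
  have "(\<exists>S2a m2a w l''. eval \<theta>2 pc (S2, m2, e) (S2a, m2a, Val (RInl w) l'') \<and>
           eval (w # \<theta>2) (sup pc l'') (S2a, m2a, e1) c2') \<or>
        (\<exists>S2a m2a w l''. eval \<theta>2 pc (S2, m2, e) (S2a, m2a, Val (RInr w) l'') \<and>
           eval (w # \<theta>2) (sup pc l'') (S2a, m2a, e2) c2')"
    using ECaseR.prems(5) by (blast elim: CaseE)
  then show ?case
  proof (elim disjE exE conjE)
    fix S2a m2a w l''
    assume r1: "eval \<theta>2 pc (S2, m2, e) (S2a, m2a, Val (RInr w) l'')"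
      and r2: "eval (w # \<theta>2) (sup pc l'') (S2a, m2a, e2) c2'"
    obtain \<beta>1 where b1: "pbij \<beta>1" "\<beta> \<subseteq>\<^sub>m \<beta>1"
      and f1: "fconf_eq A \<beta>1 (\<Sigma>a, \<mu>a, Val (RInr v1) l) (S2a, m2a, Val (RInr w) l'')"
      using ECaseR.hyps(2)[OF ECaseR.prems(1-4) r1] by blast
    show ?thesis
    proof (cases "l \<le> A")
      case True
      then have "l'' = l" "veq A \<beta>1 v1 w" using f1 by auto
      then have env: "env_eq A \<beta>1 (v1 # \<theta>) (w # \<theta>2)" and r2': "eval (w # \<theta>2) (sup pc l) (S2a, m2a, e2) c2'"
        using r2 env_eq_mono[OF ECaseR.prems(4) b1(2)] by (auto simp: env_eq_def)
      obtain \<beta>2 where "pbij \<beta>2" "\<beta>1 \<subseteq>\<^sub>m \<beta>2" "fconf_eq A \<beta>2 c' c2'"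
        using ECaseR.hyps(4)[OF b1(1) _ _ env r2'] f1 by auto
      then show ?thesis using b1 by (meson map_le_trans)
    next
      case False
      then have "\<not> l'' \<le> A" using f1 by auto
      then have "fconf_eq A \<beta>1 c' c2'"
        using high[OF ECaseR.hyps(3) r2 high_sup2[OF False] high_sup2] f1 by auto
      then show ?thesis using b1 by blast
    qed
  next
    fix S2a m2a w l''
    assume r1: "eval \<theta>2 pc (S2, m2, e) (S2a, m2a, Val (RInl w) l'')"
      and r2: "eval (w # \<theta>2) (sup pc l'') (S2a, m2a, e1) c2'"
    obtain \<beta>1 where b1: "pbij \<beta>1" "\<beta> \<subseteq>\<^sub>m \<beta>1"
      and f1: "fconf_eq A \<beta>1 (\<Sigma>a, \<mu>a, Val (RInr v1) l) (S2a, m2a, Val (RInl w) l'')"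
      using ECaseR.hyps(2)[OF ECaseR.prems(1-4) r1] by blast
    then have False': "\<not> l \<le> A" "\<not> l'' \<le> A" by auto
    then have "fconf_eq A \<beta>1 c' c2'"
      using high[OF ECaseR.hyps(3) r2 high_sup2[OF False'(1)] high_sup2[OF False'(2)]] f1 by auto
    then show ?thesis using b1 by blast
  qed
next
  case (EPair \<theta> pc \<Sigma> \<mu> e1 \<Sigma>a \<mu>a v1 e2 \<Sigma>b \<mu>b v2 \<beta> \<theta>2 S2 m2 c2')
  obtain S2a m2a w1 S2b m2b w2 where r1: "eval \<theta>2 pc (S2, m2, e1) (S2a, m2a, w1)"
    and r2: "eval \<theta>2 pc (S2a, m2a, e2) (S2b, m2b, w2)" and c2: "c2' = (S2b, m2b, Val (RPair w1 w2) pc)"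
    using EPair.prems(5) by (blast elim: PairE)
  obtain \<beta>1 where b1: "pbij \<beta>1" "\<beta> \<subseteq>\<^sub>m \<beta>1" and f1: "fconf_eq A \<beta>1 (\<Sigma>a, \<mu>a, v1) (S2a, m2a, w1)"
    using EPair.hyps(2)[OF EPair.prems(1-4) r1] by blast
  obtain \<beta>2 where b2: "pbij \<beta>2" "\<beta>1 \<subseteq>\<^sub>m \<beta>2" and f2: "fconf_eq A \<beta>2 (\<Sigma>b, \<mu>b, v2) (S2b, m2b, w2)"
    using EPair.hyps(4)[OF b1(1) _ _ env_eq_mono[OF EPair.prems(4) b1(2)] r2] f1 by auto
  have "veq A \<beta>1 v1 w1" using f1 by simp
  then have "veq A \<beta>2 v1 w1" by (rule veq_mono[OF _ b2(2)])
  then have "fconf_eq A \<beta>2 (\<Sigma>b, \<mu>b, Val (RPair v1 v2) pc) c2'" using f2 c2 by auto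
  then show ?case using b1 b2 by (meson map_le_trans)
next
  case (EFst \<theta> pc \<Sigma> \<mu> e \<Sigma>' \<mu>' v1 v2 l \<beta> \<theta>2 S2 m2 c2')
  obtain S2' m2' w1 w2 l'' where r1: "eval \<theta>2 pc (S2, m2, e) (S2', m2', Val (RPair w1 w2) l'')"
    and c2: "c2' = (S2', m2', vjoin w1 l'')"
    using EFst.prems(5) by (blast elim: FstE)
  obtain \<beta>1 where b1: "pbij \<beta>1" "\<beta> \<subseteq>\<^sub>m \<beta>1"
    and f1: "fconf_eq A \<beta>1 (\<Sigma>', \<mu>', Val (RPair v1 v2) l) (S2', m2', Val (RPair w1 w2) l'')"
    using EFst.hyps(2)[OF EFst.prems(1-4) r1] by blast
  have "veq A \<beta>1 (vjoin v1 l) (vjoin w1 l'')"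
  proof (cases "l \<le> A")
    case True then show ?thesis using f1 veq_vjoin by auto
  next
    case False then have "\<not> l'' \<le> A" using f1 by auto
    then show ?thesis using False by (simp add: veq_high lab_vjoin high_sup2)
  qed
  then show ?case using b1 f1 c2 by auto
next
  case (ESnd \<theta> pc \<Sigma> \<mu> e \<Sigma>' \<mu>' v1 v2 l \<beta> \<theta>2 S2 m2 c2')
  obtain S2' m2' w1 w2 l'' where r1: "eval \<theta>2 pc (S2, m2, e) (S2', m2', Val (RPair w1 w2) l'')"
    and c2: "c2' = (S2', m2', vjoin w2 l'')"
    using ESnd.prems(5) by (blast elim: SndE)
  obtain \<beta>1 where b1: "pbij \<beta>1" "\<beta> \<subseteq>\<^sub>m \<beta>1"
    and f1: "fconf_eq A \<beta>1 (\<Sigma>', \<mu>', Val (RPair v1 v2) l) (S2', m2', Val (RPair w1 w2) l'')"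
    using ESnd.hyps(2)[OF ESnd.prems(1-4) r1] by blast
  have "veq A \<beta>1 (vjoin v2 l) (vjoin w2 l'')"
  proof (cases "l \<le> A")
    case True then show ?thesis using f1 veq_vjoin by auto
  next
    case False then have "\<not> l'' \<le> A" using f1 by auto
    then show ?thesis using False by (simp add: veq_high lab_vjoin high_sup2)
  qed
  then show ?case using b1 f1 c2 by auto
next
  case (ELabelOf \<theta> pc \<Sigma> \<mu> e \<Sigma>' \<mu>' r l \<beta> \<theta>2 S2 m2 c2')
  obtain S2' m2' r' l'' where r1: "eval \<theta>2 pc (S2, m2, e) (S2', m2', Val r' l'')"
    and c2: "c2' = (S2', m2', Val (RLbl l'') l'')"
    using ELabelOf.prems(5) by (blast elim: LabelOfE)
  obtain \<beta>1 where b1: "pbij \<beta>1" "\<beta> \<subseteq>\<^sub>m \<beta>1"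
    and f1: "fconf_eq A \<beta>1 (\<Sigma>', \<mu>', Val r l) (S2', m2', Val r' l'')"
    using ELabelOf.hyps(2)[OF ELabelOf.prems(1-4) r1] by blast
  then show ?case using c2 by auto
next
  case (ECmpT \<theta> pc \<Sigma> \<mu> e1 \<Sigma>a \<mu>a l1 l1' e2 \<Sigma>b \<mu>b l2 l2' \<beta> \<theta>2 Sx Hx c2')
  have "\<exists>S2a H2a m1 m1' S2b H2b m2 m2'. eval \<theta>2 pc (Sx, Hx, e1) (S2a, H2a, Val (RLbl m1) m1') \<and>
     eval \<theta>2 pc (S2a, H2a, e2) (S2b, H2b, Val (RLbl m2) m2') \<and>
     c2' = (S2b, H2b, Val (if m1 \<le> m2 then RInl (Val RUnit pc) else RInr (Val RUnit pc)) (sup m1' m2'))"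
    using ECmpT.prems(5) by (elim CmpE) force+
  then obtain S2a H2a m1 m1' S2b H2b m2 m2' where r1: "eval \<theta>2 pc (Sx, Hx, e1) (S2a, H2a, Val (RLbl m1) m1')"
     and r2: "eval \<theta>2 pc (S2a, H2a, e2) (S2b, H2b, Val (RLbl m2) m2')"
     and c2: "c2' = (S2b, H2b, Val (if m1 \<le> m2 then RInl (Val RUnit pc) else RInr (Val RUnit pc)) (sup m1' m2'))"
    by blast
  obtain \<beta>1 where b1: "pbij \<beta>1" "\<beta> \<subseteq>\<^sub>m \<beta>1"
    and f1: "fconf_eq A \<beta>1 (\<Sigma>a, \<mu>a, Val (RLbl l1) l1') (S2a, H2a, Val (RLbl m1) m1')"
    using ECmpT.hyps(2)[OF ECmpT.prems(1-4) r1] by blast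
  obtain \<beta>2 where b2: "pbij \<beta>2" "\<beta>1 \<subseteq>\<^sub>m \<beta>2"
    and f2: "fconf_eq A \<beta>2 (\<Sigma>b, \<mu>b, Val (RLbl l2) l2') (S2b, H2b, Val (RLbl m2) m2')"
    using ECmpT.hyps(4)[OF b1(1) _ _ env_eq_mono[OF ECmpT.prems(4) b1(2)] r2] f1 by auto
  have "veq A \<beta>1 (Val (RLbl l1) l1') (Val (RLbl m1) m1')" using f1 by simp
  then have v1: "veq A \<beta>2 (Val (RLbl l1) l1') (Val (RLbl m1) m1')" by (rule veq_mono[OF _ b2(2)])
  have v2: "veq A \<beta>2 (Val (RLbl l2) l2') (Val (RLbl m2) m2')" using f2 by simp
  have "veq A \<beta>2 (Val (if l1 \<le> l2 then RInl (Val RUnit pc) else RInr (Val RUnit pc)) (sup l1' l2'))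
     (Val (if m1 \<le> m2 then RInl (Val RUnit pc) else RInr (Val RUnit pc)) (sup m1' m2'))"
    by (rule cmp_veq[OF v1 v2])
  then show ?case using f2 c2 b1 b2 ECmpT.hyps(5) by (auto intro: map_le_trans)
next
  case (ECmpF \<theta> pc \<Sigma> \<mu> e1 \<Sigma>a \<mu>a l1 l1' e2 \<Sigma>b \<mu>b l2 l2' \<beta> \<theta>2 Sx Hx c2')
  have "\<exists>S2a H2a m1 m1' S2b H2b m2 m2'. eval \<theta>2 pc (Sx, Hx, e1) (S2a, H2a, Val (RLbl m1) m1') \<and>
     eval \<theta>2 pc (S2a, H2a, e2) (S2b, H2b, Val (RLbl m2) m2') \<and>
     c2' = (S2b, H2b, Val (if m1 \<le> m2 then RInl (Val RUnit pc) else RInr (Val RUnit pc)) (sup m1' m2'))"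
    using ECmpF.prems(5) by (elim CmpE) force+
  then obtain S2a H2a m1 m1' S2b H2b m2 m2' where r1: "eval \<theta>2 pc (Sx, Hx, e1) (S2a, H2a, Val (RLbl m1) m1')"
     and r2: "eval \<theta>2 pc (S2a, H2a, e2) (S2b, H2b, Val (RLbl m2) m2')"
     and c2: "c2' = (S2b, H2b, Val (if m1 \<le> m2 then RInl (Val RUnit pc) else RInr (Val RUnit pc)) (sup m1' m2'))"
    by blast
  obtain \<beta>1 where b1: "pbij \<beta>1" "\<beta> \<subseteq>\<^sub>m \<beta>1"
    and f1: "fconf_eq A \<beta>1 (\<Sigma>a, \<mu>a, Val (RLbl l1) l1') (S2a, H2a, Val (RLbl m1) m1')"
    using ECmpF.hyps(2)[OF ECmpF.prems(1-4) r1] by blast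
  obtain \<beta>2 where b2: "pbij \<beta>2" "\<beta>1 \<subseteq>\<^sub>m \<beta>2"
    and f2: "fconf_eq A \<beta>2 (\<Sigma>b, \<mu>b, Val (RLbl l2) l2') (S2b, H2b, Val (RLbl m2) m2')"
    using ECmpF.hyps(4)[OF b1(1) _ _ env_eq_mono[OF ECmpF.prems(4) b1(2)] r2] f1 by auto
  have "veq A \<beta>1 (Val (RLbl l1) l1') (Val (RLbl m1) m1')" using f1 by simp
  then have v1: "veq A \<beta>2 (Val (RLbl l1) l1') (Val (RLbl m1) m1')" by (rule veq_mono[OF _ b2(2)])
  have v2: "veq A \<beta>2 (Val (RLbl l2) l2') (Val (RLbl m2) m2')" using f2 by simp
  have "veq A \<beta>2 (Val (if l1 \<le> l2 then RInl (Val RUnit pc) else RInr (Val RUnit pc)) (sup l1' l2'))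
     (Val (if m1 \<le> m2 then RInl (Val RUnit pc) else RInr (Val RUnit pc)) (sup m1' m2'))"
    by (rule cmp_veq[OF v1 v2])
  then show ?case using f2 c2 b1 b2 ECmpF.hyps(5) by (auto intro: map_le_trans)
next
  case (ETaint \<theta> pc \<Sigma> \<mu> e1 \<Sigma>a \<mu>a l l' e2 c' \<beta> \<theta>2 S2 m2 c2')
  obtain S2a m2a m m' where r1: "eval \<theta>2 pc (S2, m2, e1) (S2a, m2a, Val (RLbl m) m')"
    and mm: "m' \<le> m" and r2: "eval \<theta>2 m (S2a, m2a, e2) c2'"
    using ETaint.prems(5) by (blast elim: TaintE)
  obtain \<beta>1 where b1: "pbij \<beta>1" "\<beta> \<subseteq>\<^sub>m \<beta>1"
    and f1: "fconf_eq A \<beta>1 (\<Sigma>a, \<mu>a, Val (RLbl l) l') (S2a, m2a, Val (RLbl m) m')"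
    using ETaint.hyps(2)[OF ETaint.prems(1-4) r1] by blast
  show ?case
  proof (cases "l' \<le> A")
    case True
    then have "m = l" using f1 by auto
    then have r2': "eval \<theta>2 l (S2a, m2a, e2) c2'" using r2 by simp
    have s1: "store_eq A \<beta>1 \<Sigma>a S2a" "heap_eq A \<beta>1 \<mu>a m2a" using f1 by simp_all
    obtain \<beta>2 where "pbij \<beta>2" "\<beta>1 \<subseteq>\<^sub>m \<beta>2" "fconf_eq A \<beta>2 c' c2'"
      using ETaint.hyps(5)[OF b1(1) s1 env_eq_mono[OF ETaint.prems(4) b1(2)] r2'] by blast
    then show ?thesis using b1 by (meson map_le_trans)
  next
    case False
    then have h: "\<not> m' \<le> A" using f1 by auto
    have "\<not> l \<le> A" using False ETaint.hyps(3) high_up by blast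
    moreover have "\<not> m \<le> A" using h mm high_up by blast
    ultimately have "fconf_eq A \<beta>1 c' c2'"
      using high[OF ETaint.hyps(4) r2] f1 by auto
    then show ?thesis using b1 by blast
  qed
next
  case (ENew \<theta> pc \<Sigma> \<mu> e \<Sigma>' \<mu>' r l n \<beta> \<theta>2 Sx Hx c2')
  obtain S2' H2' r' l'' where r1: "eval \<theta>2 pc (Sx, Hx, e) (S2', H2', Val r' l'')"
    and c2: "c2' = (S2'(l'' := lupd (S2' l'') (length (S2' l'')) r'), H2', Val (RRefI l'' (length (S2' l''))) pc)"
    using ENew.prems(5) by (blast elim: NewIE)
  obtain \<beta>1 where b1: "pbij \<beta>1" "\<beta> \<subseteq>\<^sub>m \<beta>1"
    and f1: "fconf_eq A \<beta>1 (\<Sigma>', \<mu>', Val r l) (S2', H2', Val r' l'')"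
    using ENew.hyps(2)[OF ENew.prems(1-4) r1] by blast
  have se: "store_eq A \<beta>1 \<Sigma>' S2'" and he: "heap_eq A \<beta>1 \<mu>' H2'" and ve: "veq A \<beta>1 (Val r l) (Val r' l'')"
    using f1 by simp_all
  have iff: "l \<le> A \<longleftrightarrow> l'' \<le> A" using ve by auto
  have low: "l = l'' \<and> list_all2 (req A \<beta>1) (lupd (\<Sigma>' l) n r) (lupd (S2' l'') (length (S2' l'')) r')
             \<and> n = length (S2' l'')" if "l \<le> A"
  proof -
    have "l'' = l" "req A \<beta>1 r r'" using ve that by auto
    moreover have la: "list_all2 (req A \<beta>1) (\<Sigma>' l) (S2' l)" using se that unfolding store_eq_def mem_eq_def by auto
    moreover have "n = length (S2' l)" using ENew.hyps(3) list_all2_lengthD[OF la] by simp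
    ultimately show ?thesis using list_all2_lupd by metis
  qed
  have "store_eq A \<beta>1 (\<Sigma>'(l := lupd (\<Sigma>' l) n r)) (S2'(l'' := lupd (S2' l'') (length (S2' l'')) r'))"
    using store_eq_upd[OF se iff] low by blast
  moreover have "veq A \<beta>1 (Val (RRefI l n) pc) (Val (RRefI l'' (length (S2' l''))) pc)"
    using low iff by auto
  ultimately show ?case using c2 b1 he by auto
next
  case (ERead \<theta> pc \<Sigma> \<mu> e \<Sigma>' \<mu>' l n l' r \<beta> \<theta>2 Sx Hx c2')
  obtain S2' H2' m k m' where r1: "eval \<theta>2 pc (Sx, Hx, e) (S2', H2', Val (RRefI m k) m')"
    and c2: "c2' = (S2', H2', Val (S2' m ! k) (sup m m'))"
    using ERead.prems(5) by (blast elim: ReadIE)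
  obtain \<beta>1 where b1: "pbij \<beta>1" "\<beta> \<subseteq>\<^sub>m \<beta>1"
    and f1: "fconf_eq A \<beta>1 (\<Sigma>', \<mu>', Val (RRefI l n) l') (S2', H2', Val (RRefI m k) m')"
    using ERead.hyps(2)[OF ERead.prems(1-4) r1] by blast
  have se: "store_eq A \<beta>1 \<Sigma>' S2'" and ve: "veq A \<beta>1 (Val (RRefI l n) l') (Val (RRefI m k) m')"
    using f1 by simp_all
  have "veq A \<beta>1 (Val r (sup l l')) (Val (S2' m ! k) (sup m m'))"
  proof (cases "sup l l' \<le> A")
    case True
    then have eq: "m = l" "m' = l'" "k = n" using refI_lab[OF ve] by auto
    have "l \<le> A" using True by (simp add: le_sup_iff)
    then have "list_all2 (req A \<beta>1) (\<Sigma>' l) (S2' l)" using se unfolding store_eq_def mem_eq_def by auto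
    then have "req A \<beta>1 r (S2' l ! n)" using ERead.hyps(3,4) list_all2_nthD by blast
    then show ?thesis using eq by simp
  next
    case False
    then have "\<not> sup m m' \<le> A" using refI_lab[OF ve] by auto
    then show ?thesis using False by simp
  qed
  then show ?case using c2 b1 f1 by auto
next
  case (EWrite \<theta> pc \<Sigma> \<mu> e1 \<Sigma>a \<mu>a l n l1 e2 \<Sigma>b \<mu>b r l2 \<beta> \<theta>2 Sx Hx c2')
  have "\<exists>S2a H2a m k m1 S2b H2b r' m2. eval \<theta>2 pc (Sx, Hx, e1) (S2a, H2a, Val (RRefI m k) m1) \<and> m1 \<le> m \<and>
     eval \<theta>2 pc (S2a, H2a, e2) (S2b, H2b, Val r' m2) \<and> m2 \<le> m \<and>
     c2' = (S2b(m := lupd (S2b m) k r'), H2b, Val RUnit pc)"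
    using EWrite.prems(5) by (elim WriteIE) blast
  then obtain S2a H2a m k m1 S2b H2b r' m2 where r1: "eval \<theta>2 pc (Sx, Hx, e1) (S2a, H2a, Val (RRefI m k) m1)"
    and mm1: "m1 \<le> m" and r2: "eval \<theta>2 pc (S2a, H2a, e2) (S2b, H2b, Val r' m2)" and mm2: "m2 \<le> m"
    and c2: "c2' = (S2b(m := lupd (S2b m) k r'), H2b, Val RUnit pc)"
    by blast
  obtain \<beta>1 where b1: "pbij \<beta>1" "\<beta> \<subseteq>\<^sub>m \<beta>1"
    and f1: "fconf_eq A \<beta>1 (\<Sigma>a, \<mu>a, Val (RRefI l n) l1) (S2a, H2a, Val (RRefI m k) m1)"
    using EWrite.hyps(2)[OF EWrite.prems(1-4) r1] by blast
  obtain \<beta>2 where b2: "pbij \<beta>2" "\<beta>1 \<subseteq>\<^sub>m \<beta>2"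
    and f2: "fconf_eq A \<beta>2 (\<Sigma>b, \<mu>b, Val r l2) (S2b, H2b, Val r' m2)"
    using EWrite.hyps(5)[OF b1(1) _ _ env_eq_mono[OF EWrite.prems(4) b1(2)] r2] f1 by auto
  have ve: "veq A \<beta>1 (Val (RRefI l n) l1) (Val (RRefI m k) m1)" using f1 by simp
  have rw: "(l \<le> A \<longleftrightarrow> m \<le> A) \<and> (l \<le> A \<longrightarrow> m = l \<and> k = n)"
    by (rule refI_write[OF ve EWrite.hyps(3) mm1])
  have se: "store_eq A \<beta>2 \<Sigma>b S2b" and he: "heap_eq A \<beta>2 \<mu>b H2b" and v2: "veq A \<beta>2 (Val r l2) (Val r' m2)"
    using f2 by simp_all
  have low: "l = m \<and> list_all2 (req A \<beta>2) (lupd (\<Sigma>b l) n r) (lupd (S2b m) k r')" if "l \<le> A"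
  proof -
    have eq: "m = l" "k = n" using rw that by auto
    have "l2 \<le> A" using EWrite.hyps(6) that order_trans by blast
    then have "req A \<beta>2 r r'" using v2 by auto
    moreover have "list_all2 (req A \<beta>2) (\<Sigma>b l) (S2b l)" using se that unfolding store_eq_def mem_eq_def by auto
    ultimately show ?thesis using eq list_all2_lupd by metis
  qed
  have "store_eq A \<beta>2 (\<Sigma>b(l := lupd (\<Sigma>b l) n r)) (S2b(m := lupd (S2b m) k r'))"
    using store_eq_upd[OF se] rw low by blast
  then show ?case using c2 b1 b2 he by (auto intro: map_le_trans)
next
  case (ELabelOfRef \<theta> pc \<Sigma> \<mu> e \<Sigma>' \<mu>' l n l' \<beta> \<theta>2 Sx Hx c2')
  obtain S2' H2' m k m' where r1: "eval \<theta>2 pc (Sx, Hx, e) (S2', H2', Val (RRefI m k) m')"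
    and c2: "c2' = (S2', H2', Val (RLbl m) (sup m m'))"
    using ELabelOfRef.prems(5) by (blast elim: LabelOfRefIE)
  obtain \<beta>1 where b1: "pbij \<beta>1" "\<beta> \<subseteq>\<^sub>m \<beta>1"
    and f1: "fconf_eq A \<beta>1 (\<Sigma>', \<mu>', Val (RRefI l n) l') (S2', H2', Val (RRefI m k) m')"
    using ELabelOfRef.hyps(2)[OF ELabelOfRef.prems(1-4) r1] by blast
  have ve: "veq A \<beta>1 (Val (RRefI l n) l') (Val (RRefI m k) m')" using f1 by simp
  have "veq A \<beta>1 (Val (RLbl l) (sup l l')) (Val (RLbl m) (sup m m'))"
    using refI_lab[OF ve] by auto
  then show ?case using c2 b1 f1 by auto
next
  case (ENewFS \<theta> pc \<Sigma> \<mu> e \<Sigma>' \<mu>' v n \<beta> \<theta>2 Sx Hx c2')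
  obtain S2' H2' v' where r1: "eval \<theta>2 pc (Sx, Hx, e) (S2', H2', v')"
    and c2: "c2' = (S2', lupd H2' (length H2') v', Val (RRefS (length H2')) pc)"
    using ENewFS.prems(5) by (blast elim: NewSE)
  obtain \<beta>1 where b1: "pbij \<beta>1" "\<beta> \<subseteq>\<^sub>m \<beta>1"
    and f1: "fconf_eq A \<beta>1 (\<Sigma>', \<mu>', v) (S2', H2', v')"
    using ENewFS.hyps(2)[OF ENewFS.prems(1-4) r1] by blast
  have se: "store_eq A \<beta>1 \<Sigma>' S2'" and he: "heap_eq A \<beta>1 \<mu>' H2'" and ve: "veq A \<beta>1 v v'"
    using f1 by simp_all
  define \<beta>2 where "\<beta>2 = \<beta>1(length \<mu>' \<mapsto> length H2')"
  have b2: "pbij \<beta>2" "\<beta>1 \<subseteq>\<^sub>m \<beta>2" using pbij_alloc[OF b1(1) he] heap_eq_alloc(2)[OF he ve]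
    unfolding \<beta>2_def by auto
  have "heap_eq A \<beta>2 (\<mu>' @ [v]) (H2' @ [v'])" using heap_eq_alloc(1)[OF he ve] unfolding \<beta>2_def .
  moreover have "store_eq A \<beta>2 \<Sigma>' S2'" using store_eq_mono[OF se b2(2)] .
  moreover have "veq A \<beta>2 (Val (RRefS n) pc) (Val (RRefS (length H2')) pc)"
    using ENewFS.hyps(3) unfolding \<beta>2_def by auto
  ultimately have "fconf_eq A \<beta>2 (\<Sigma>', lupd \<mu>' n v, Val (RRefS n) pc) c2'"
    using c2 ENewFS.hyps(3) by (simp add: lupd_append)
  then show ?case using b1 b2 by (meson map_le_trans)
next
  case (EReadFS \<theta> pc \<Sigma> \<mu> e \<Sigma>' \<mu>' n l r l' \<beta> \<theta>2 Sx Hx c2')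
  obtain S2' H2' k m r' m' where r1: "eval \<theta>2 pc (Sx, Hx, e) (S2', H2', Val (RRefS k) m)"
    and hk: "H2' ! k = Val r' m'"
    and c2: "c2' = (S2', H2', Val r' (sup m m'))"
    using EReadFS.prems(5) by (blast elim: ReadSE)
  obtain \<beta>1 where b1: "pbij \<beta>1" "\<beta> \<subseteq>\<^sub>m \<beta>1"
    and f1: "fconf_eq A \<beta>1 (\<Sigma>', \<mu>', Val (RRefS n) l) (S2', H2', Val (RRefS k) m)"
    using EReadFS.hyps(2)[OF EReadFS.prems(1-4) r1] by blast
  have he: "heap_eq A \<beta>1 \<mu>' H2'" and ve: "veq A \<beta>1 (Val (RRefS n) l) (Val (RRefS k) m)"
    using f1 by simp_all
  have "veq A \<beta>1 (Val r (sup l l')) (Val r' (sup m m'))"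
  proof (cases "l \<le> A")
    case True
    then have "m = l" "\<beta>1 n = Some k" using ve by auto
    then have "veq A \<beta>1 (\<mu>' ! n) (H2' ! k)" using he unfolding heap_eq_def by blast
    then have "veq A \<beta>1 (vjoin (Val r l') l) (vjoin (Val r' m') l)"
      using EReadFS.hyps(4) hk veq_vjoin by metis
    then show ?thesis using \<open>m = l\<close> by (simp add: sup_commute)
  next
    case False
    then have "\<not> m \<le> A" using ve by auto
    then show ?thesis using False by (simp add: le_sup_iff)
  qed
  then show ?case using c2 b1 f1 by auto
next
  case (ELabelOfRefFS \<theta> pc \<Sigma> \<mu> e \<Sigma>' \<mu>' n l1 r l2 \<beta> \<theta>2 Sx Hx c2')
  obtain S2' H2' k m1 r' m2 where r1: "eval \<theta>2 pc (Sx, Hx, e) (S2', H2', Val (RRefS k) m1)"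
    and hk: "H2' ! k = Val r' m2"
    and c2: "c2' = (S2', H2', Val (RLbl m2) (sup m1 m2))"
    using ELabelOfRefFS.prems(5) by (blast elim: LabelOfRefSE)
  obtain \<beta>1 where b1: "pbij \<beta>1" "\<beta> \<subseteq>\<^sub>m \<beta>1"
    and f1: "fconf_eq A \<beta>1 (\<Sigma>', \<mu>', Val (RRefS n) l1) (S2', H2', Val (RRefS k) m1)"
    using ELabelOfRefFS.hyps(2)[OF ELabelOfRefFS.prems(1-4) r1] by blast
  have he: "heap_eq A \<beta>1 \<mu>' H2'" and ve: "veq A \<beta>1 (Val (RRefS n) l1) (Val (RRefS k) m1)"
    using f1 by simp_all
  have "veq A \<beta>1 (Val (RLbl l2) (sup l1 l2)) (Val (RLbl m2) (sup m1 m2))"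
  proof (cases "l1 \<le> A")
    case True
    then have "m1 = l1" "\<beta>1 n = Some k" using ve by auto
    then have "veq A \<beta>1 (\<mu>' ! n) (H2' ! k)" using he unfolding heap_eq_def by blast
    then have "veq A \<beta>1 (Val r l2) (Val r' m2)" using ELabelOfRefFS.hyps(4) hk by simp
    then show ?thesis using \<open>m1 = l1\<close> by (auto simp: le_sup_iff)
  next
    case False
    then have "\<not> m1 \<le> A" using ve by auto
    then show ?thesis using False by (simp add: le_sup_iff)
  qed
  then show ?case using c2 b1 f1 by auto
next
  case (EWriteFS \<theta> pc \<Sigma> \<mu> e1 \<Sigma>a \<mu>a n l e2 \<Sigma>b \<mu>b r2 l2 r1 l1 \<beta> \<theta>2 Sx Hx c2')
  have "\<exists>S2a H2a k m S2b H2b r2' m2 r1' m1. eval \<theta>2 pc (Sx, Hx, e1) (S2a, H2a, Val (RRefS k) m) \<and>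
     eval \<theta>2 pc (S2a, H2a, e2) (S2b, H2b, Val r2' m2) \<and> k < length H2b \<and> H2b ! k = Val r1' m1 \<and> m \<le> m1 \<and>
     c2' = (S2b, lupd H2b k (Val r2' (sup m2 m)), Val RUnit pc)"
    using EWriteFS.prems(5) by (elim WriteSE) blast
  then obtain S2a H2a k m S2b H2b r2' m2 r1' m1 where r1: "eval \<theta>2 pc (Sx, Hx, e1) (S2a, H2a, Val (RRefS k) m)"
    and r2: "eval \<theta>2 pc (S2a, H2a, e2) (S2b, H2b, Val r2' m2)" and kl: "k < length H2b"
    and hk: "H2b ! k = Val r1' m1" and mm: "m \<le> m1"
    and c2: "c2' = (S2b, lupd H2b k (Val r2' (sup m2 m)), Val RUnit pc)"
    by blast
  obtain \<beta>1 where b1: "pbij \<beta>1" "\<beta> \<subseteq>\<^sub>m \<beta>1"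
    and f1: "fconf_eq A \<beta>1 (\<Sigma>a, \<mu>a, Val (RRefS n) l) (S2a, H2a, Val (RRefS k) m)"
    using EWriteFS.hyps(2)[OF EWriteFS.prems(1-4) r1] by blast
  obtain \<beta>2 where b2: "pbij \<beta>2" "\<beta>1 \<subseteq>\<^sub>m \<beta>2"
    and f2: "fconf_eq A \<beta>2 (\<Sigma>b, \<mu>b, Val r2 l2) (S2b, H2b, Val r2' m2)"
    using EWriteFS.hyps(4)[OF b1(1) _ _ env_eq_mono[OF EWriteFS.prems(4) b1(2)] r2] f1 by auto
  have ve: "veq A \<beta>1 (Val (RRefS n) l) (Val (RRefS k) m)" using f1 by simp
  have se: "store_eq A \<beta>2 \<Sigma>b S2b" and he: "heap_eq A \<beta>2 \<mu>b H2b" and v2: "veq A \<beta>2 (Val r2 l2) (Val r2' m2)"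
    using f2 by simp_all
  have "heap_eq A \<beta>2 (\<mu>b[n := Val r2 (sup l2 l)]) (H2b[k := Val r2' (sup m2 m)])"
  proof (cases "l \<le> A")
    case True
    then have "m = l" "\<beta>1 n = Some k" using ve by auto
    then have bk: "\<beta>2 n = Some k" using b2(2) unfolding map_le_def by (metis domI)
    have "veq A \<beta>2 (vjoin (Val r2 l2) l) (vjoin (Val r2' m2) l)" using veq_vjoin[OF v2] .
    then show ?thesis using heap_eq_write[OF b2(1) he bk] \<open>m = l\<close> by simp
  next
    case False
    then have hm: "\<not> m \<le> A" using ve by auto
    have "hpres A \<mu>b (\<mu>b[n := Val r2 (sup l2 l)])"
      using EWriteFS.hyps(5,6,7) False high_up high_sup2 by (intro hpres_upd) auto
    moreover have "hpres A H2b (H2b[k := Val r2' (sup m2 m)])"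
      using kl hk mm hm high_up high_sup2 by (intro hpres_upd) auto
    ultimately show ?thesis using heap_eq_pres[OF he] by blast
  qed
  then show ?case using c2 b1 b2 se EWriteFS.hyps(5) kl
    by (auto simp: lupd_upd intro: map_le_trans)
qed

theorem mainTheorem3:
  fixes A pc :: "'l::semilattice_sup"
    and \<beta> :: "nat \<rightharpoonup> nat"
    and c1 c2 :: "'l iconf" and \<theta>1 \<theta>2 :: "'l env"
    and c1' c2' :: "'l fconf"
  assumes "pbij \<beta>"
    and "valid_init c1 \<theta>1" and "valid_init c2 \<theta>2"
    and "iconf_eq A \<beta> c1 c2" and "env_eq A \<beta> \<theta>1 \<theta>2"
    and "eval \<theta>1 pc c1 c1'" and "eval \<theta>2 pc c2 c2'"
  shows "\<exists>\<beta>'. pbij \<beta>' \<and> \<beta> \<subseteq>\<^sub>m \<beta>' \<and> fconf_eq A \<beta>' c1' c2'"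
proof -
  obtain S1 m1 e1 where c1: "c1 = (S1, m1, e1)" by (cases c1) auto
  obtain S2 m2 e2 where c2: "c2 = (S2, m2, e2)" by (cases c2) auto
  have "store_eq A \<beta> S1 S2" "heap_eq A \<beta> m1 m2" "e1 = e2" using assms(4) c1 c2 by simp_all
  then show ?thesis using main[of \<theta>1 pc S1 m1 e1 c1' \<beta> A S2 m2 \<theta>2 c2'] assms(1,5,6,7) c1 c2 by simp
qed

end
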